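(* Let $X\sim p(\bm x,\bm\theta)$ on $\mathbb R^d$ and let $\hat{\bm\theta}=(\hat\theta_1,\dots,\hat\theta_m):\mathbb R^d\to\mathbb R^m$ be an estimator whose components are three times continuously differentiable with bounded third derivatives and such that $\hat\theta_a$, their first and second derivatives have finite second moments under $p(\cdot,\bm\theta)$. Let $Z=\sigma W$ where $W$ is independent of $X$, $\mathrm E[W]=0$, $\mathrm{Var}[W]=I$, and $W$ has finite moments of all orders. Then for all $a,b$, $$\mathrm{Var}^W_{\theta}[\hat{\bm\theta}]_{ab}=\lim_{\sigma^2\to0}\frac{\mathrm{Var}_\theta[\hat{\bm\theta}(X+Z)]_{ab}-\mathrm{Var}_\theta[\hat{\bm\theta}(X)]_{ab}}{\sigma^2}-\frac12\Big(\mathrm{Cov}_\theta[\hat\theta_a(X),\Delta\hat\theta_b(X)]+\mathrm{Cov}_\theta[\hat\theta_b(X),\Delta\hat\theta_a(X)]\Big),$$ where $\Delta$ is the Laplacian. In particular, if $\Delta\hat\theta_a$ is constant for every $a$ (e.g. each $\hat\theta_a$ is a quadratic polynomial in $\bm x$), then $\mathrm{Var}^W_\theta[\hat{\bm\theta}]=\lim_{\sigma^2\to0}\big(\mathrm{Var}_\theta[\hat{\bm\theta}(X+Z)]-\mathrm{Var}_\theta[\hat{\bm\theta}(X)]\big)/\sigma^2$.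
   Context: The Wasserstein covariance matrix of an estimator $\hat{\bm\theta}$ (with $\nabla_{\bm x}\hat\theta_a$ square integrable) is the $m\times m$ matrix $\mathrm{Var}^W_\theta[\hat{\bm\theta}]_{ab}=\mathrm E_\theta[(\nabla_{\bm x}\hat\theta_a)^\top(\nabla_{\bm x}\hat\theta_b)]$. $\mathrm{Var}_\theta[\cdot]$ denotes the ordinary covariance matrix. *)

theory Defs
  imports "HOL-Analysis.Analysis" "HOL-Probability.Probability"
begin

definition partial_deriv :: "'n::finite \<Rightarrow> (real^'n \<Rightarrow> real) \<Rightarrow> real^'n \<Rightarrow> real" where
  "partial_deriv i g x = deriv (\<lambda>t. g (x + t *\<^sub>R axis i 1)) 0"

definition has_partials :: "(real^'n::finite \<Rightarrow> real) \<Rightarrow> bool" where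
  "has_partials g \<longleftrightarrow> (\<forall>i x. (\<lambda>t. g (x + t *\<^sub>R axis i 1)) differentiable (at 0))"

definition C3_bounded_third :: "(real^'n::finite \<Rightarrow> real) \<Rightarrow> bool" where
  "C3_bounded_third g \<longleftrightarrow>
     continuous_on UNIV g \<and> has_partials g \<and>
     (\<forall>i. continuous_on UNIV (partial_deriv i g) \<and> has_partials (partial_deriv i g)) \<and>
     (\<forall>i j. continuous_on UNIV (partial_deriv j (partial_deriv i g)) \<and>
            has_partials (partial_deriv j (partial_deriv i g))) \<and>
     (\<forall>i j k. continuous_on UNIV (partial_deriv k (partial_deriv j (partial_deriv i g))) \<and>
              bounded (range (partial_deriv k (partial_deriv j (partial_deriv i g)))))"

definition laplacian :: "(real^'n::finite \<Rightarrow> real) \<Rightarrow> real^'n \<Rightarrow> real" where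
  "laplacian g x = (\<Sum>i\<in>UNIV. partial_deriv i (partial_deriv i g) x)"

definition covar :: "'a measure \<Rightarrow> ('a \<Rightarrow> real) \<Rightarrow> ('a \<Rightarrow> real) \<Rightarrow> real" where
  "covar M f g = (\<integral>\<omega>. (f \<omega> - (\<integral>\<omega>'. f \<omega>' \<partial>M)) * (g \<omega> - (\<integral>\<omega>'. g \<omega>' \<partial>M)) \<partial>M)"

definition wasserstein_cov ::
  "'a measure \<Rightarrow> ('a \<Rightarrow> real^'n::finite) \<Rightarrow> ('m \<Rightarrow> real^'n \<Rightarrow> real) \<Rightarrow> 'm \<Rightarrow> 'm \<Rightarrow> real" where
  "wasserstein_cov M X f a b =
     (\<integral>\<omega>. (\<Sum>i\<in>UNIV. partial_deriv i (f a) (X \<omega>) * partial_deriv i (f b) (X \<omega>)) \<partial>M)"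

end

theory Submission
  imports Defs
begin

lemma partial_deriv_DERIV:
  assumes "has_partials g"
  shows "((\<lambda>t. g (y + t *\<^sub>R axis k 1)) has_real_derivative partial_deriv k g (y + t *\<^sub>R axis k 1)) (at t)"
proof -
  have d: "(\<lambda>s. g ((y + t *\<^sub>R axis k 1) + s *\<^sub>R axis k 1)) differentiable (at 0)"
    using assms unfolding has_partials_def by blast
  hence "((\<lambda>s. g ((y + t *\<^sub>R axis k 1) + s *\<^sub>R axis k 1)) has_real_derivative partial_deriv k g (y + t *\<^sub>R axis k 1)) (at 0)"
    unfolding partial_deriv_def using DERIV_deriv_iff_real_differentiable by blast
  hence "((\<lambda>s. g (y + (s + t) *\<^sub>R axis k 1)) has_real_derivative partial_deriv k g (y + t *\<^sub>R axis k 1)) (at 0)"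
    by (simp add: scaleR_add_left algebra_simps)
  then show ?thesis using DERIV_shift[of "\<lambda>t. g (y + t *\<^sub>R axis k 1)" _ 0 t] by simp
qed

lemma mvt_any:
  fixes \<phi> \<phi>' :: "real \<Rightarrow> real"
  assumes d: "\<And>t. (\<phi> has_real_derivative \<phi>' t) (at t)"
  shows "\<exists>t. \<bar>t\<bar> \<le> \<bar>b\<bar> \<and> \<phi> b - \<phi> 0 = b * \<phi>' t"
proof (cases b "0::real" rule: linorder_cases)
  case less
  from MVT2[OF less d] obtain z where "b < z" "z < 0" "\<phi> 0 - \<phi> b = (0 - b) * \<phi>' z" by blast
  then show ?thesis by (intro exI[of _ z]) (auto simp: algebra_simps)
next
  case equal then show ?thesis by auto
next
  case greater
  from MVT2[OF greater d] obtain z where "0 < z" "z < b" "\<phi> b - \<phi> 0 = (b - 0) * \<phi>' z" by blast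
  then show ?thesis by (intro exI[of _ z]) (auto simp: algebra_simps)
qed

lemma bl_sum_partial: "bounded_linear (\<lambda>h::real^'n::finite. \<Sum>i\<in>UNIV. h$i * c i)"
  by (intro bounded_linear_sum ballI bounded_linear_compose[OF bounded_linear_mult_left bounded_linear_vec_nth])


definition proj :: "'n::finite set \<Rightarrow> real^'n \<Rightarrow> real^'n" where
  "proj S h = (\<chi> i. if i \<in> S then h$i else 0)"

lemma proj_UNIV[simp]: "proj UNIV h = h"
  by (simp add: proj_def vec_eq_iff)

lemma proj_insert: "k \<notin> S \<Longrightarrow> proj (insert k S) h = proj S h + h$k *\<^sub>R axis k 1"
  by (auto simp: proj_def vec_eq_iff axis_def)

lemma norm_proj_shift:
  assumes "k \<notin> S" "\<bar>t\<bar> \<le> \<bar>h$k\<bar>"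
  shows "norm (proj S h + t *\<^sub>R axis k 1) \<le> norm h"
  by (rule norm_le_componentwise_cart) (use assms in \<open>auto simp: proj_def axis_def\<close>)

lemma partials_frechet:
  fixes g :: "real^'n::finite \<Rightarrow> real"
  assumes hp: "has_partials g" and cont: "\<And>i. continuous_on UNIV (partial_deriv i g)"
  shows "(g has_derivative (\<lambda>h. \<Sum>i\<in>UNIV. h$i * partial_deriv i g x)) (at x)"
  unfolding has_derivative_at_alt
proof (intro conjI allI impI)
  show "bounded_linear (\<lambda>h. \<Sum>i\<in>UNIV. h$i * partial_deriv i g x)" by (rule bl_sum_partial)
  fix e :: real assume e: "e > 0"
  define n where "n = real CARD('n)"
  have n: "n > 0" by (simp add: n_def)
  define \<epsilon> where "\<epsilon> = e / n"
  have eps: "\<epsilon> > 0" using e n by (simp add: \<epsilon>_def)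
  have "\<forall>i. \<forall>\<^sub>F y in nhds x. dist (partial_deriv i g y) (partial_deriv i g x) < \<epsilon>"
  proof
    fix i
    have "isCont (partial_deriv i g) x" using cont[of i] by (simp add: continuous_on_eq_continuous_at)
    hence "(partial_deriv i g \<longlongrightarrow> partial_deriv i g x) (nhds x)"
      by (simp add: isCont_def tendsto_at_iff_tendsto_nhds[symmetric])
    then show "\<forall>\<^sub>F y in nhds x. dist (partial_deriv i g y) (partial_deriv i g x) < \<epsilon>"
      using eps by (rule tendstoD)
  qed
  hence "\<forall>\<^sub>F y in nhds x. \<forall>i. dist (partial_deriv i g y) (partial_deriv i g x) < \<epsilon>"
    by (simp add: eventually_all_finite)
  then obtain d where d: "d > 0" and dP: "\<And>y i. dist y x < d \<Longrightarrow> \<bar>partial_deriv i g y - partial_deriv i g x\<bar> < \<epsilon>"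
    unfolding eventually_nhds_metric by (auto simp: dist_real_def)
  have claim: "norm h < d \<longrightarrow> \<bar>g (x + proj S h) - g x - (\<Sum>i\<in>S. h$i * partial_deriv i g x)\<bar> \<le> \<epsilon> * (\<Sum>i\<in>S. \<bar>h$i\<bar>)"
    if "finite S" for S h
    using that
  proof (induction S rule: finite_induct)
    case empty then show ?case by (simp add: proj_def vec_eq_iff[symmetric] zero_vec_def[symmetric])
  next
    case (insert k S)
    show ?case
    proof
      assume nh: "norm h < d"
      define y where "y = x + proj S h"
      obtain t where t: "\<bar>t\<bar> \<le> \<bar>h$k\<bar>" and
        mv: "g (y + h$k *\<^sub>R axis k 1) - g (y + 0 *\<^sub>R axis k 1) = h$k * partial_deriv k g (y + t *\<^sub>R axis k 1)"
        using mvt_any[of "\<lambda>t. g (y + t *\<^sub>R axis k 1)", OF partial_deriv_DERIV[OF hp]] by blast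
      have "dist (y + t *\<^sub>R axis k 1) x \<le> norm h"
        using norm_proj_shift[OF insert(2) t] by (simp add: y_def dist_norm)
      hence c: "\<bar>partial_deriv k g (y + t *\<^sub>R axis k 1) - partial_deriv k g x\<bar> < \<epsilon>"
        using dP nh by force
      have step: "\<bar>g (y + h$k *\<^sub>R axis k 1) - g y - h$k * partial_deriv k g x\<bar> \<le> \<epsilon> * \<bar>h$k\<bar>"
      proof -
        have "g (y + h$k *\<^sub>R axis k 1) - g y - h$k * partial_deriv k g x
           = h$k * (partial_deriv k g (y + t *\<^sub>R axis k 1) - partial_deriv k g x)"
          using mv by (simp add: algebra_simps)
        also have "\<bar>\<dots>\<bar> \<le> \<bar>h$k\<bar> * \<epsilon>" unfolding abs_mult
          using c by (intro mult_left_mono) auto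
        finally show ?thesis by (simp add: mult.commute)
      qed
      have ih: "\<bar>g y - g x - (\<Sum>i\<in>S. h$i * partial_deriv i g x)\<bar> \<le> \<epsilon> * (\<Sum>i\<in>S. \<bar>h$i\<bar>)"
        using insert.IH nh by (simp add: y_def)
      have eq: "x + proj (insert k S) h = y + h$k *\<^sub>R axis k 1"
        by (simp add: proj_insert[OF insert(2)] y_def algebra_simps)
      show "\<bar>g (x + proj (insert k S) h) - g x - (\<Sum>i\<in>insert k S. h$i * partial_deriv i g x)\<bar> \<le> \<epsilon> * (\<Sum>i\<in>insert k S. \<bar>h$i\<bar>)"
        unfolding eq using step ih insert(1,2) by (simp add: algebra_simps)
    qed
  qed
  show "\<exists>d>0. \<forall>y. norm (y - x) < d \<longrightarrow> norm (g y - g x - (\<Sum>i\<in>UNIV. (y - x)$i * partial_deriv i g x)) \<le> e * norm (y - x)"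
  proof (intro exI[of _ d] conjI allI impI d)
    fix y assume "norm (y - x) < d"
    with claim[of UNIV "y - x"] have 1: "\<bar>g y - g x - (\<Sum>i\<in>UNIV. (y - x)$i * partial_deriv i g x)\<bar> \<le> \<epsilon> * (\<Sum>i\<in>UNIV. \<bar>(y-x)$i\<bar>)"
      by simp
    have "(\<Sum>i\<in>UNIV. \<bar>(y-x)$i\<bar>) \<le> (\<Sum>i\<in>(UNIV::'n set). norm (y - x))"
      by (intro sum_mono) (metis component_le_norm_cart real_norm_def)
    also have "\<dots> = n * norm (y - x)" by (simp add: n_def)
    finally have "\<epsilon> * (\<Sum>i\<in>UNIV. \<bar>(y-x)$i\<bar>) \<le> \<epsilon> * (n * norm (y - x))"
      using eps by (intro mult_left_mono) auto
    also have "\<dots> = e * norm (y - x)" using n by (simp add: \<epsilon>_def)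
    finally show "norm (g y - g x - (\<Sum>i\<in>UNIV. (y - x)$i * partial_deriv i g x)) \<le> e * norm (y - x)"
      using 1 by simp
  qed
qed


lemma line_DERIV:
  fixes G :: "real^'n::finite \<Rightarrow> real"
  assumes "has_partials G" "\<And>i. continuous_on UNIV (partial_deriv i G)"
  shows "((\<lambda>t. G (x + t *\<^sub>R h)) has_real_derivative (\<Sum>j\<in>UNIV. h$j * partial_deriv j G (x + t *\<^sub>R h))) (at t)"
proof -
  have inner: "((\<lambda>t. x + t *\<^sub>R h) has_derivative (\<lambda>s. s *\<^sub>R h)) (at t)"
    by (auto intro!: derivative_eq_intros)
  have "((\<lambda>t. G (x + t *\<^sub>R h)) has_derivative (\<lambda>s. \<Sum>i\<in>UNIV. (s *\<^sub>R h)$i * partial_deriv i G (x + t *\<^sub>R h))) (at t)"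
    by (rule has_derivative_compose[OF inner partials_frechet[OF assms]])
  moreover have "(\<lambda>s. \<Sum>i\<in>UNIV. (s *\<^sub>R h)$i * partial_deriv i G (x + t *\<^sub>R h)) = (*) (\<Sum>j\<in>UNIV. h$j * partial_deriv j G (x + t *\<^sub>R h))"
    by (auto simp: sum_distrib_left algebra_simps)
  ultimately show ?thesis by (simp add: has_field_derivative_def)
qed

lemma sum_bound_card:
  fixes h :: "real^'n::finite"
  assumes "\<And>i. \<bar>A i\<bar> \<le> M"
  shows "\<bar>\<Sum>i\<in>UNIV. h$i * A i\<bar> \<le> real CARD('n) * norm h * M"
proof -
  have M: "M \<ge> 0" using assms[of undefined] by simp
  have "\<bar>\<Sum>i\<in>UNIV. h$i * A i\<bar> \<le> (\<Sum>i\<in>UNIV. \<bar>h$i * A i\<bar>)" by (rule sum_abs)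
  also have "\<dots> \<le> (\<Sum>i\<in>(UNIV::'n set). norm h * M)"
    unfolding abs_mult
    by (intro sum_mono mult_mono) (auto simp: assms M intro: component_le_norm_cart[of h, unfolded real_norm_def])
  also have "\<dots> = real CARD('n) * norm h * M" by simp
  finally show ?thesis .
qed

lemma taylor2:
  fixes g :: "real^'n::finite \<Rightarrow> real"
  assumes "C3_bounded_third g"
  shows "\<exists>K. \<forall>x h. \<bar>g (x + h) - g x - (\<Sum>i\<in>UNIV. h$i * partial_deriv i g x)
      - (1/2) * (\<Sum>i\<in>UNIV. h$i * (\<Sum>j\<in>UNIV. h$j * partial_deriv j (partial_deriv i g) x))\<bar> \<le> K * norm h ^ 3"
proof -
  note A = assms[unfolded C3_bounded_third_def]
  let ?D3 = "\<lambda>(i,j,k). range (partial_deriv k (partial_deriv j (partial_deriv i g)))"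
  have "bounded (\<Union>p\<in>(UNIV::('n\<times>'n\<times>'n) set). ?D3 p)"
    using A by (intro bounded_UN) auto
  then obtain B where B: "\<And>i j k y. \<bar>partial_deriv k (partial_deriv j (partial_deriv i g)) y\<bar> \<le> B"
    unfolding bounded_iff by fastforce
  define n where "n = real CARD('n)"
  show ?thesis
  proof (intro exI allI)
    fix x h :: "real^'n"
    define diff :: "nat \<Rightarrow> real \<Rightarrow> real" where "diff = (\<lambda>m t. if m = 0 then g (x + t *\<^sub>R h)
      else if m = 1 then (\<Sum>i\<in>UNIV. h$i * partial_deriv i g (x + t *\<^sub>R h))
      else if m = 2 then (\<Sum>i\<in>UNIV. h$i * (\<Sum>j\<in>UNIV. h$j * partial_deriv j (partial_deriv i g) (x + t *\<^sub>R h)))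
      else (\<Sum>i\<in>UNIV. h$i * (\<Sum>j\<in>UNIV. h$j * (\<Sum>k\<in>UNIV. h$k * partial_deriv k (partial_deriv j (partial_deriv i g)) (x + t *\<^sub>R h)))))"
    have D: "DERIV (diff m) t :> diff (Suc m) t" if "m < 3" for m t
    proof -
      have "m = 0 \<or> m = 1 \<or> m = 2" using that by auto
      then show ?thesis
      proof (elim disjE)
        assume "m = 0" then show ?thesis
          unfolding diff_def using line_DERIV[of g x h t] A by simp
      next
        assume "m = 1" then show ?thesis
          unfolding diff_def using A
          by (auto intro!: DERIV_sum DERIV_cmult line_DERIV)
      next
        assume "m = 2" then show ?thesis
          unfolding diff_def using A
          by (auto intro!: DERIV_sum DERIV_cmult line_DERIV)
      qed
    qed
    from Taylor[of 3 diff "\<lambda>t. g (x + t *\<^sub>R h)" 0 1 0 1] D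
    obtain t where "g (x + 1 *\<^sub>R h) = (\<Sum>m<3. diff m 0 / fact m * (1 - 0) ^ m) + diff 3 t / fact 3 * (1 - 0) ^ 3"
      by (auto simp: diff_def)
    hence eq: "g (x + h) - g x - (\<Sum>i\<in>UNIV. h$i * partial_deriv i g x)
      - (1/2) * (\<Sum>i\<in>UNIV. h$i * (\<Sum>j\<in>UNIV. h$j * partial_deriv j (partial_deriv i g) x)) = diff 3 t / 6"
      by (simp add: diff_def eval_nat_numeral fact_numeral)
    have "\<bar>diff 3 t\<bar> \<le> n * norm h * (n * norm h * (n * norm h * B))"
      unfolding diff_def n_def using B
      by (auto intro!: sum_bound_card)
    then show "\<bar>g (x + h) - g x - (\<Sum>i\<in>UNIV. h$i * partial_deriv i g x)
      - (1/2) * (\<Sum>i\<in>UNIV. h$i * (\<Sum>j\<in>UNIV. h$j * partial_deriv j (partial_deriv i g) x))\<bar> \<le> (n^3 * B / 6) * norm h ^ 3"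
      unfolding eq by (simp add: power3_eq_cube algebra_simps)
  qed
qed

lemma covar_expand:
  assumes "prob_space M" "integrable M U" "integrable M V" "integrable M (\<lambda>\<omega>. U \<omega> * V \<omega>)"
  shows "covar M U V = (\<integral>\<omega>. U \<omega> * V \<omega> \<partial>M) - (\<integral>\<omega>. U \<omega> \<partial>M) * (\<integral>\<omega>. V \<omega> \<partial>M)"
proof -
  interpret prob_space M by fact
  let ?a = "\<integral>\<omega>. U \<omega> \<partial>M" and ?b = "\<integral>\<omega>. V \<omega> \<partial>M"
  have "(\<lambda>\<omega>. (U \<omega> - ?a) * (V \<omega> - ?b)) = (\<lambda>\<omega>. (U \<omega> * V \<omega> - ?a * V \<omega>) - (?b * U \<omega> - ?a * ?b))"
    by (auto simp: algebra_simps)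
  then have "covar M U V = (\<integral>\<omega>. (U \<omega> * V \<omega> - ?a * V \<omega>) - (?b * U \<omega> - ?a * ?b) \<partial>M)"
    by (simp add: covar_def)
  also have "\<dots> = (\<integral>\<omega>. U \<omega> * V \<omega> \<partial>M) - ?a * ?b - (?b * ?a - ?a * ?b)"
    using assms(2-4) by (simp add: prob_space)
  finally show ?thesis by (simp add: algebra_simps)
qed

lemma covar_const:
  assumes "prob_space M"
  shows "covar M U (\<lambda>\<omega>. c) = 0"
proof -
  interpret prob_space M by fact
  show ?thesis by (simp add: covar_def prob_space)
qed

locale setting = prob_space M for M :: "'o measure" +
  fixes X W :: "'o \<Rightarrow> real^'n::finite"
  assumes Xm[measurable]: "X \<in> borel_measurable M"
    and Wm[measurable]: "W \<in> borel_measurable M"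
    and indep: "indep_var borel X borel W"
    and W_mean: "\<And>i. (\<integral>\<omega>. W \<omega> $ i \<partial>M) = 0"
    and W_var: "\<And>i j. covar M (\<lambda>\<omega>. W \<omega> $ i) (\<lambda>\<omega>. W \<omega> $ j) = (if i = j then 1 else 0)"
    and W_moments: "\<And>k::nat. integrable M (\<lambda>\<omega>. norm (W \<omega>) ^ k)"
begin

lemma indep_prod:
  fixes \<phi> \<psi> :: "real^'n \<Rightarrow> real"
  assumes [measurable]: "\<phi> \<in> borel_measurable borel" "\<psi> \<in> borel_measurable borel"
    and "integrable M (\<lambda>\<omega>. \<phi> (X \<omega>))" "integrable M (\<lambda>\<omega>. \<psi> (W \<omega>))"
  shows "integrable M (\<lambda>\<omega>. \<psi> (W \<omega>) * \<phi> (X \<omega>))"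
    "(\<integral>\<omega>. \<psi> (W \<omega>) * \<phi> (X \<omega>) \<partial>M) = (\<integral>\<omega>. \<psi> (W \<omega>) \<partial>M) * (\<integral>\<omega>. \<phi> (X \<omega>) \<partial>M)"
proof -
  have i: "indep_var borel (\<lambda>\<omega>. \<phi> (X \<omega>)) borel (\<lambda>\<omega>. \<psi> (W \<omega>))"
    using indep_var_compose[OF indep assms(1,2)] by (simp add: comp_def)
  show "integrable M (\<lambda>\<omega>. \<psi> (W \<omega>) * \<phi> (X \<omega>))"
    using indep_var_integrable[OF i assms(3,4)] by (simp add: mult.commute)
  show "(\<integral>\<omega>. \<psi> (W \<omega>) * \<phi> (X \<omega>) \<partial>M) = (\<integral>\<omega>. \<psi> (W \<omega>) \<partial>M) * (\<integral>\<omega>. \<phi> (X \<omega>) \<partial>M)"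
    using indep_var_lebesgue_integral[OF i assms(3,4)] by (simp add: mult.commute)
qed

lemma W_poly: "integrable M (\<lambda>\<omega>. (1 + norm (W \<omega>)) ^ k)"
proof -
  have "(\<lambda>\<omega>. (1 + norm (W \<omega>)) ^ k) = (\<lambda>\<omega>. \<Sum>i\<le>k. of_nat (k choose i) * norm (W \<omega>) ^ i)"
  proof
    fix \<omega>
    show "(1 + norm (W \<omega>)) ^ k = (\<Sum>i\<le>k. of_nat (k choose i) * norm (W \<omega>) ^ i)"
      using binomial_ring[of "norm (W \<omega>)" 1 k] by (simp add: add.commute)
  qed
  then show ?thesis using W_moments by simp
qed

lemma W_bounded:
  fixes \<psi> :: "real^'n \<Rightarrow> real"
  assumes [measurable]: "\<psi> \<in> borel_measurable borel" and b: "\<And>w. \<bar>\<psi> w\<bar> \<le> C * (1 + norm w) ^ k"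
  shows "integrable M (\<lambda>\<omega>. \<psi> (W \<omega>))"
proof (rule Bochner_Integration.integrable_bound[OF integrable_mult_right[OF W_poly[of k], of C]])
  show "AE x in M. norm (\<psi> (W x)) \<le> norm (C * (1 + norm (W x)) ^ k)"
    using b by (auto intro: order_trans[OF _ abs_ge_self])
qed measurable

lemma W_coord: "integrable M (\<lambda>\<omega>. W \<omega> $ i)"
  by (rule W_bounded[where C=1 and k=1]) (auto intro: order_trans[OF component_le_norm_cart])

lemma W_coord2: "integrable M (\<lambda>\<omega>. W \<omega> $ i * W \<omega> $ j)"
proof (rule W_bounded[where C=1 and k=2])
  fix w :: "real^'n"
  have "\<bar>w $ i\<bar> \<le> 1 + norm w" "\<bar>w $ j\<bar> \<le> 1 + norm w"
    by (auto intro: order_trans[OF component_le_norm_cart])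
  then have "\<bar>w $ i * w $ j\<bar> \<le> (1 + norm w) * (1 + norm w)"
    unfolding abs_mult by (intro mult_mono) auto
  then show "\<bar>w $ i * w $ j\<bar> \<le> 1 * (1 + norm w) ^ 2"
    by (simp add: power2_eq_square)
qed measurable

lemma W_cov: "(\<integral>\<omega>. W \<omega> $ i * W \<omega> $ j \<partial>M) = (if i = j then 1 else 0)"
  using W_var[of i j] by (simp add: covar_def W_mean)

end

lemma abs_le_1_sq: "\<bar>a::real\<bar> \<le> 1 + a\<^sup>2"
proof -
  have "0 \<le> (\<bar>a\<bar> - 1)\<^sup>2" by simp
  moreover have "(\<bar>a\<bar> - 1)\<^sup>2 = a\<^sup>2 - 2*\<bar>a\<bar> + 1" by (simp add: power2_diff)
  moreover have "0 \<le> a\<^sup>2" by simp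
  ultimately show ?thesis by linarith
qed

lemma abs_mult_le_sq: "\<bar>a * b::real\<bar> \<le> a\<^sup>2 + b\<^sup>2"
proof -
  have "0 \<le> (\<bar>a\<bar> - \<bar>b\<bar>)\<^sup>2" by simp
  moreover have "(\<bar>a\<bar> - \<bar>b\<bar>)\<^sup>2 = a\<^sup>2 - 2*\<bar>a*b\<bar> + b\<^sup>2" by (simp add: power2_diff abs_mult)
  moreover have "0 \<le> \<bar>a*b\<bar>" by simp
  ultimately show ?thesis by linarith
qed

context setting begin

lemma sq_int1:
  fixes \<phi> :: "real^'n \<Rightarrow> real"
  assumes [measurable]: "\<phi> \<in> borel_measurable borel" and i: "integrable M (\<lambda>\<omega>. (\<phi> (X \<omega>))\<^sup>2)"
  shows "integrable M (\<lambda>\<omega>. \<phi> (X \<omega>))"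
proof (rule Bochner_Integration.integrable_bound[OF Bochner_Integration.integrable_add[OF integrable_const[of 1] i]])
  show "AE x in M. norm (\<phi> (X x)) \<le> norm (1 + (\<phi> (X x))\<^sup>2)"
  proof (rule AE_I2)
    fix x
    have "\<bar>\<phi> (X x)\<bar> \<le> 1 + (\<phi> (X x))\<^sup>2"
      by (rule abs_le_1_sq)
    then show "norm (\<phi> (X x)) \<le> norm (1 + (\<phi> (X x))\<^sup>2)" by simp
  qed
qed measurable

lemma sq_prod:
  fixes \<phi> \<psi> :: "real^'n \<Rightarrow> real"
  assumes [measurable]: "\<phi> \<in> borel_measurable borel" "\<psi> \<in> borel_measurable borel"
    and i: "integrable M (\<lambda>\<omega>. (\<phi> (X \<omega>))\<^sup>2)" "integrable M (\<lambda>\<omega>. (\<psi> (X \<omega>))\<^sup>2)"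
  shows "integrable M (\<lambda>\<omega>. \<phi> (X \<omega>) * \<psi> (X \<omega>))"
proof (rule Bochner_Integration.integrable_bound[OF Bochner_Integration.integrable_add[OF i]])
  show "AE x in M. norm (\<phi> (X x) * \<psi> (X x)) \<le> norm ((\<phi> (X x))\<^sup>2 + (\<psi> (X x))\<^sup>2)"
  proof (rule AE_I2)
    fix x
    have "\<bar>\<phi> (X x) * \<psi> (X x)\<bar> \<le> (\<phi> (X x))\<^sup>2 + (\<psi> (X x))\<^sup>2"
      by (rule abs_mult_le_sq)
    then show "norm (\<phi> (X x) * \<psi> (X x)) \<le> norm ((\<phi> (X x))\<^sup>2 + (\<psi> (X x))\<^sup>2)" by simp
  qed
qed measurable

lemma E_c1:
  fixes \<phi> :: "'n \<Rightarrow> real^'n \<Rightarrow> real"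
  assumes [measurable]: "\<And>i. \<phi> i \<in> borel_measurable borel" and i: "\<And>i. integrable M (\<lambda>\<omega>. \<phi> i (X \<omega>))"
  shows "integrable M (\<lambda>\<omega>. \<Sum>i\<in>UNIV. W \<omega> $ i * \<phi> i (X \<omega>))"
    "(\<integral>\<omega>. (\<Sum>i\<in>UNIV. W \<omega> $ i * \<phi> i (X \<omega>)) \<partial>M) = 0"
proof -
  have I: "integrable M (\<lambda>\<omega>. W \<omega> $ i * \<phi> i (X \<omega>))" for i
    using indep_prod(1)[of "\<phi> i" "\<lambda>w. w $ i"] i W_coord by simp
  show "integrable M (\<lambda>\<omega>. \<Sum>i\<in>UNIV. W \<omega> $ i * \<phi> i (X \<omega>))" using I by simp
  have "(\<integral>\<omega>. (\<Sum>i\<in>UNIV. W \<omega> $ i * \<phi> i (X \<omega>)) \<partial>M) = (\<Sum>i\<in>UNIV. \<integral>\<omega>. W \<omega> $ i * \<phi> i (X \<omega>) \<partial>M)"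
    using I by (simp add: integral_sum)
  also have "\<dots> = 0"
    using indep_prod(2)[of "\<phi> _" "\<lambda>w. w $ _"] i W_coord by (simp add: W_mean)
  finally show "(\<integral>\<omega>. (\<Sum>i\<in>UNIV. W \<omega> $ i * \<phi> i (X \<omega>)) \<partial>M) = 0" .
qed

lemma E_c2:
  fixes \<phi> :: "'n \<Rightarrow> 'n \<Rightarrow> real^'n \<Rightarrow> real"
  assumes [measurable]: "\<And>i j. \<phi> i j \<in> borel_measurable borel" and i: "\<And>i j. integrable M (\<lambda>\<omega>. \<phi> i j (X \<omega>))"
  shows "integrable M (\<lambda>\<omega>. \<Sum>i\<in>UNIV. \<Sum>j\<in>UNIV. (W \<omega> $ i * W \<omega> $ j) * \<phi> i j (X \<omega>))"
    "(\<integral>\<omega>. (\<Sum>i\<in>UNIV. \<Sum>j\<in>UNIV. (W \<omega> $ i * W \<omega> $ j) * \<phi> i j (X \<omega>)) \<partial>M) = (\<Sum>i\<in>UNIV. \<integral>\<omega>. \<phi> i i (X \<omega>) \<partial>M)"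
proof -
  have I: "integrable M (\<lambda>\<omega>. (W \<omega> $ i * W \<omega> $ j) * \<phi> i j (X \<omega>))" for i j
    using indep_prod(1)[of "\<phi> i j" "\<lambda>w. w $ i * w $ j"] i W_coord2 by simp
  show "integrable M (\<lambda>\<omega>. \<Sum>i\<in>UNIV. \<Sum>j\<in>UNIV. (W \<omega> $ i * W \<omega> $ j) * \<phi> i j (X \<omega>))" using I by simp
  have "(\<integral>\<omega>. (\<Sum>i\<in>UNIV. \<Sum>j\<in>UNIV. (W \<omega> $ i * W \<omega> $ j) * \<phi> i j (X \<omega>)) \<partial>M)
     = (\<Sum>i\<in>UNIV. \<Sum>j\<in>UNIV. \<integral>\<omega>. (W \<omega> $ i * W \<omega> $ j) * \<phi> i j (X \<omega>) \<partial>M)"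
    using I by (simp add: integral_sum)
  also have "\<dots> = (\<Sum>i\<in>UNIV. \<Sum>j\<in>UNIV. if i = j then (\<integral>\<omega>. \<phi> i j (X \<omega>) \<partial>M) else 0)"
  proof (intro sum.cong refl)
    fix i j
    show "(\<integral>\<omega>. (W \<omega> $ i * W \<omega> $ j) * \<phi> i j (X \<omega>) \<partial>M) = (if i = j then (\<integral>\<omega>. \<phi> i j (X \<omega>) \<partial>M) else 0)"
      using indep_prod(2)[of "\<phi> i j" "\<lambda>w. w $ i * w $ j"] i W_coord2 by (simp add: W_cov)
  qed
  also have "\<dots> = (\<Sum>i\<in>UNIV. \<integral>\<omega>. \<phi> i i (X \<omega>) \<partial>M)"
    by simp
  finally show "(\<integral>\<omega>. (\<Sum>i\<in>UNIV. \<Sum>j\<in>UNIV. (W \<omega> $ i * W \<omega> $ j) * \<phi> i j (X \<omega>)) \<partial>M) = (\<Sum>i\<in>UNIV. \<integral>\<omega>. \<phi> i i (X \<omega>) \<partial>M)" .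
qed

end

definition Lf :: "(real^'n::finite \<Rightarrow> real) \<Rightarrow> real^'n \<Rightarrow> real^'n \<Rightarrow> real" where
  "Lf g x w = (\<Sum>i\<in>UNIV. w$i * partial_deriv i g x)"

definition Qf :: "(real^'n::finite \<Rightarrow> real) \<Rightarrow> real^'n \<Rightarrow> real^'n \<Rightarrow> real" where
  "Qf g x w = (1/2) * (\<Sum>i\<in>UNIV. w$i * (\<Sum>j\<in>UNIV. w$j * partial_deriv j (partial_deriv i g) x))"

lemma taylor_sigma:
  fixes g :: "real^'n::finite \<Rightarrow> real"
  assumes "C3_bounded_third g"
  shows "\<exists>K\<ge>0. \<forall>x w \<sigma>. \<sigma> \<ge> 0 \<longrightarrow>
     \<bar>g (x + \<sigma> *\<^sub>R w) - g x - \<sigma> * Lf g x w - \<sigma>\<^sup>2 * Qf g x w\<bar> \<le> K * \<sigma>^3 * norm w ^ 3"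
proof -
  obtain K where K: "\<And>x h. \<bar>g (x + h) - g x - (\<Sum>i\<in>UNIV. h$i * partial_deriv i g x)
      - (1/2) * (\<Sum>i\<in>UNIV. h$i * (\<Sum>j\<in>UNIV. h$j * partial_deriv j (partial_deriv i g) x))\<bar> \<le> K * norm h ^ 3"
    using taylor2[OF assms] by blast
  show ?thesis
  proof (intro exI[of _ "\<bar>K\<bar>"] conjI allI impI)
    fix x w and \<sigma> :: real assume s: "\<sigma> \<ge> 0"
    have l: "(\<Sum>i\<in>UNIV. (\<sigma> *\<^sub>R w)$i * partial_deriv i g x) = \<sigma> * Lf g x w"
      by (simp add: Lf_def sum_distrib_left mult.assoc)
    have q: "(1/2) * (\<Sum>i\<in>UNIV. (\<sigma> *\<^sub>R w)$i * (\<Sum>j\<in>UNIV. (\<sigma> *\<^sub>R w)$j * partial_deriv j (partial_deriv i g) x)) = \<sigma>\<^sup>2 * Qf g x w"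
      by (simp add: Qf_def sum_distrib_left power2_eq_square algebra_simps)
    have "\<bar>g (x + \<sigma> *\<^sub>R w) - g x - \<sigma> * Lf g x w - \<sigma>\<^sup>2 * Qf g x w\<bar> \<le> K * norm (\<sigma> *\<^sub>R w) ^ 3"
      using K[of x "\<sigma> *\<^sub>R w"] unfolding l q .
    also have "\<dots> \<le> \<bar>K\<bar> * norm (\<sigma> *\<^sub>R w) ^ 3" by (intro mult_right_mono) auto
    also have "\<dots> = \<bar>K\<bar> * \<sigma>^3 * norm w ^ 3" using s by (simp add: power_mult_distrib)
    finally show "\<bar>g (x + \<sigma> *\<^sub>R w) - g x - \<sigma> * Lf g x w - \<sigma>\<^sup>2 * Qf g x w\<bar> \<le> \<bar>K\<bar> * \<sigma>^3 * norm w ^ 3" .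
  qed simp
qed

lemma abs3: "\<bar>a + b + c\<bar> \<le> \<bar>a\<bar> + \<bar>b\<bar> + \<bar>(c::real)\<bar>"
  by (meson abs_triangle_ineq add_mono order_refl order_trans)

lemma abs4: "\<bar>a + b + c + d\<bar> \<le> \<bar>a\<bar> + \<bar>b\<bar> + \<bar>c\<bar> + \<bar>(d::real)\<bar>"
  by (meson abs3 abs_triangle_ineq add_mono order_refl order_trans)

lemma le1_mult: "0 \<le> s \<Longrightarrow> s \<le> 1 \<Longrightarrow> \<bar>x\<bar> \<le> A \<Longrightarrow> \<bar>s * x\<bar> \<le> (A::real)"
  by (simp add: abs_mult) (metis abs_ge_zero mult_left_le_one_le order_trans)

lemma err_arith:
  fixes \<sigma> A Eg Eh g Lg Qg h Lh Qh Rg Rh :: real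
  assumes s: "0 < \<sigma>" "\<sigma> \<le> 1"
    and b: "\<bar>g\<bar> \<le> A" "\<bar>Lg\<bar> \<le> A" "\<bar>Qg\<bar> \<le> A" "\<bar>h\<bar> \<le> A" "\<bar>Lh\<bar> \<le> A" "\<bar>Qh\<bar> \<le> A"
    and r: "\<bar>Rg\<bar> \<le> Eg" "\<bar>Rh\<bar> \<le> Eh"
  shows "\<bar>\<sigma>^3*(Lg*Qh + Qg*Lh) + \<sigma>^4*(Qg*Qh) + Rg*(h + \<sigma>*Lh + \<sigma>\<^sup>2*Qh + Rh) + (g + \<sigma>*Lg + \<sigma>\<^sup>2*Qg)*Rh\<bar>
         \<le> \<sigma>^3*(3*A\<^sup>2) + Eg*(3*A + Eh) + 3*A*Eh"
proof -
  have A: "0 \<le> A" using b(1) by (meson abs_ge_zero order_trans)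
  have s2: "\<sigma>\<^sup>2 \<le> 1" "0 \<le> \<sigma>\<^sup>2" using s by (auto simp: power_le_one)
  have s3: "0 \<le> \<sigma>^3" using s by simp
  have s4: "\<sigma>^4 \<le> \<sigma>^3" using s by (simp add: power_decreasing)
  have p1: "\<bar>Lg*Qh\<bar> \<le> A*A" "\<bar>Qg*Lh\<bar> \<le> A*A" "\<bar>Qg*Qh\<bar> \<le> A*A"
    unfolding abs_mult using b A by (auto intro!: mult_mono)
  have t1: "\<bar>\<sigma>^3*(Lg*Qh + Qg*Lh) + \<sigma>^4*(Qg*Qh)\<bar> \<le> \<sigma>^3*(3*A\<^sup>2)"
  proof -
    have a: "\<bar>Lg*Qh + Qg*Lh\<bar> \<le> A*A + A*A"
      using abs_triangle_ineq[of "Lg*Qh" "Qg*Lh"] p1 by simp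
    have "\<bar>\<sigma>^3*(Lg*Qh + Qg*Lh)\<bar> \<le> \<sigma>^3*(A*A + A*A)"
      unfolding abs_mult using a s3 by (simp add: mult_left_mono)
    moreover have "\<bar>\<sigma>^4*(Qg*Qh)\<bar> \<le> \<sigma>^3*(A*A)"
      unfolding abs_mult using p1(3) s4 s b A by (intro mult_mono) (auto intro: mult_mono)
    ultimately have "\<bar>\<sigma>^3*(Lg*Qh + Qg*Lh) + \<sigma>^4*(Qg*Qh)\<bar> \<le> \<sigma>^3*(A*A + A*A) + \<sigma>^3*(A*A)"
      by (rule order_trans[OF abs_triangle_ineq add_mono])
    then show ?thesis by (simp add: power2_eq_square algebra_simps)
  qed
  have vh: "\<bar>h + \<sigma>*Lh + \<sigma>\<^sup>2*Qh\<bar> \<le> 3*A"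
    using abs3[of h "\<sigma>*Lh" "\<sigma>\<^sup>2*Qh"] le1_mult[of \<sigma> Lh A] le1_mult[of "\<sigma>\<^sup>2" Qh A] s s2 b(4-6) by simp
  have vg: "\<bar>g + \<sigma>*Lg + \<sigma>\<^sup>2*Qg\<bar> \<le> 3*A"
    using abs3[of g "\<sigma>*Lg" "\<sigma>\<^sup>2*Qg"] le1_mult[of \<sigma> Lg A] le1_mult[of "\<sigma>\<^sup>2" Qg A] s s2 b(1-3) by simp
  have t2: "\<bar>Rg*(h + \<sigma>*Lh + \<sigma>\<^sup>2*Qh + Rh)\<bar> \<le> Eg*(3*A + Eh)"
  proof -
    have "\<bar>h + \<sigma>*Lh + \<sigma>\<^sup>2*Qh + Rh\<bar> \<le> 3*A + Eh"
      using abs_triangle_ineq[of "h + \<sigma>*Lh + \<sigma>\<^sup>2*Qh" Rh] vh r(2) by simp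
    then show ?thesis unfolding abs_mult using r(1) by (intro mult_mono) auto
  qed
  have t3: "\<bar>(g + \<sigma>*Lg + \<sigma>\<^sup>2*Qg)*Rh\<bar> \<le> 3*A*Eh"
    unfolding abs_mult using vg r(2) by (intro mult_mono) auto
  have "\<bar>\<sigma>^3*(Lg*Qh + Qg*Lh) + \<sigma>^4*(Qg*Qh) + Rg*(h + \<sigma>*Lh + \<sigma>\<^sup>2*Qh + Rh) + (g + \<sigma>*Lg + \<sigma>\<^sup>2*Qg)*Rh\<bar>
     \<le> \<bar>\<sigma>^3*(Lg*Qh + Qg*Lh) + \<sigma>^4*(Qg*Qh)\<bar> + \<bar>Rg*(h + \<sigma>*Lh + \<sigma>\<^sup>2*Qh + Rh)\<bar> + \<bar>(g + \<sigma>*Lg + \<sigma>\<^sup>2*Qg)*Rh\<bar>"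
    by (rule abs3)
  also have "\<dots> \<le> \<sigma>^3*(3*A\<^sup>2) + Eg*(3*A + Eh) + 3*A*Eh"
    using t1 t2 t3 by (intro add_mono)
  finally show ?thesis .
qed

lemma arith_Y:
  fixes n N r :: real
  assumes n: "0 \<le> n" and N: "0 \<le> N" and r: "1 \<le> r"
  shows "r \<le> (1+n)\<^sup>2 * ((1+N)^3 * r)"
    and "n * N * r \<le> (1+n)\<^sup>2 * ((1+N)^3 * r)"
    and "1/2 * (n * N * (n * N * r)) \<le> (1+n)\<^sup>2 * ((1+N)^3 * r)"
    and "N^3 \<le> (1+N)^3 * r"
proof -
  have c1: "1 \<le> (1+n)\<^sup>2" using n by (simp add: one_le_power)
  have Y1: "1 \<le> (1+N)^3" using N by (simp add: one_le_power)
  have nc: "n \<le> (1+n)\<^sup>2"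
    using self_le_power[of "1+n" 2] n by simp
  have NY: "N \<le> (1+N)^3"
    using self_le_power[of "1+N" 3] N by simp
  have n2: "n * n \<le> (1+n)\<^sup>2" using n unfolding power2_eq_square by (intro mult_mono) auto
  have N2: "N * N \<le> (1+N)^3"
  proof -
    have "N * N \<le> (1+N)*(1+N)" using N by (intro mult_mono) auto
    also have "\<dots> \<le> (1+N)^3" using self_le_power[of "1+N" 3] N unfolding power3_eq_cube
      by (intro mult_right_mono) auto
    finally show ?thesis by (simp add: power3_eq_cube)
  qed
  have P: "1 \<le> (1+n)\<^sup>2 * (1+N)^3" using mult_mono[OF c1 Y1] by simp
  have r0: "0 \<le> r" using r by simp
  show "r \<le> (1+n)\<^sup>2 * ((1+N)^3 * r)"
    using mult_right_mono[OF P r0] by (simp only: mult.assoc mult_1)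
  show "n * N * r \<le> (1+n)\<^sup>2 * ((1+N)^3 * r)"
  proof -
    have "n * N \<le> (1+n)\<^sup>2 * (1+N)^3" using nc NY n N by (intro mult_mono) auto
    from mult_right_mono[OF this r0] show ?thesis by (simp only: mult.assoc)
  qed
  show "1/2 * (n * N * (n * N * r)) \<le> (1+n)\<^sup>2 * ((1+N)^3 * r)"
  proof -
    have "1/2 * (n * N * (n * N)) \<le> (n * n) * (N * N)" using n N by (simp add: algebra_simps)
    also have "\<dots> \<le> (1+n)\<^sup>2 * (1+N)^3" using n2 N2 n N by (intro mult_mono) auto
    finally have "1/2 * (n * N * (n * N)) \<le> (1+n)\<^sup>2 * (1+N)^3" .
    from mult_right_mono[OF this r0] show ?thesis by (simp only: mult.assoc)
  qed
  show "N^3 \<le> (1+N)^3 * r"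
  proof -
    have "N^3 \<le> (1+N)^3" using N by (intro power_mono) auto
    also have "\<dots> \<le> (1+N)^3 * r" using mult_left_mono[OF r, of "(1+N)^3"] Y1 N by simp
    finally show ?thesis .
  qed
qed
lemma err_identity:
  fixes uu vv G L Q R H L' Q' R' \<sigma> :: real
  assumes "uu = G + \<sigma>*L + \<sigma>\<^sup>2*Q + R" "vv = H + \<sigma>*L' + \<sigma>\<^sup>2*Q' + R'"
  shows "uu * vv - G*H - \<sigma>*(G*L' + L*H) - \<sigma>\<^sup>2*(L*L' + G*Q' + Q*H)
    = \<sigma>^3*(L*Q' + Q*L') + \<sigma>^4*(Q*Q') + R*(H + \<sigma>*L' + \<sigma>\<^sup>2*Q' + R') + (G + \<sigma>*L + \<sigma>\<^sup>2*Q)*R'"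
  unfolding assms power2_eq_square power3_eq_cube power4_eq_xxxx by algebra

lemma final_arith:
  fixes \<sigma> c Kg Kh Y :: real
  assumes "0 < \<sigma>" "\<sigma> \<le> 1" "0 \<le> c" "0 \<le> Kg" "0 \<le> Kh"
  shows "\<sigma>^3*(3*(c*Y)\<^sup>2) + Kg*\<sigma>^3*Y*(3*(c*Y) + Kh*\<sigma>^3*Y) + 3*(c*Y)*(Kh*\<sigma>^3*Y)
     \<le> \<sigma>^3 * ((3*c\<^sup>2 + 3*c*Kg + 3*c*Kh + Kg*Kh) * Y\<^sup>2)"
proof -
  have e: "\<sigma>^3*(3*(c*Y)\<^sup>2) + Kg*\<sigma>^3*Y*(3*(c*Y) + Kh*\<sigma>^3*Y) + 3*(c*Y)*(Kh*\<sigma>^3*Y)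
     = \<sigma>^3 * ((3*c\<^sup>2 + 3*c*Kg + 3*c*Kh) * Y\<^sup>2) + \<sigma>^3 * (\<sigma>^3 * (Kg*Kh*Y\<^sup>2))"
    by (simp add: algebra_simps power2_eq_square)
  have "\<sigma>^3 * (Kg*Kh*Y\<^sup>2) \<le> 1 * (Kg*Kh*Y\<^sup>2)"
    using assms by (intro mult_right_mono) (auto simp: power_le_one)
  then have "\<sigma>^3 * (\<sigma>^3 * (Kg*Kh*Y\<^sup>2)) \<le> \<sigma>^3 * (Kg*Kh*Y\<^sup>2)"
    using assms by (intro mult_left_mono) auto
  then show ?thesis unfolding e by (simp add: algebra_simps)
qed

lemma sq_le_sqrt: "a\<^sup>2 \<le> y \<Longrightarrow> \<bar>a::real\<bar> \<le> sqrt y"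
  using real_le_rsqrt[of "\<bar>a\<bar>" y] by (simp add: power2_abs)

locale pair = setting +
  fixes g h :: "real^'n \<Rightarrow> real"
  assumes sg: "C3_bounded_third g" and sh: "C3_bounded_third h"
    and g0: "integrable M (\<lambda>\<omega>. (g (X \<omega>))\<^sup>2)"
    and g1: "\<And>i. integrable M (\<lambda>\<omega>. (partial_deriv i g (X \<omega>))\<^sup>2)"
    and g2: "\<And>i j. integrable M (\<lambda>\<omega>. (partial_deriv j (partial_deriv i g) (X \<omega>))\<^sup>2)"
    and h0: "integrable M (\<lambda>\<omega>. (h (X \<omega>))\<^sup>2)"
    and h1: "\<And>i. integrable M (\<lambda>\<omega>. (partial_deriv i h (X \<omega>))\<^sup>2)"
    and h2: "\<And>i j. integrable M (\<lambda>\<omega>. (partial_deriv j (partial_deriv i h) (X \<omega>))\<^sup>2)"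
begin

lemma meas[measurable]:
  "g \<in> borel_measurable borel" "h \<in> borel_measurable borel"
  "partial_deriv i g \<in> borel_measurable borel" "partial_deriv i h \<in> borel_measurable borel"
  "partial_deriv j (partial_deriv i g) \<in> borel_measurable borel"
  "partial_deriv j (partial_deriv i h) \<in> borel_measurable borel"
  using sg sh unfolding C3_bounded_third_def by (auto intro: borel_measurable_continuous_onI)

definition S :: "real^'n \<Rightarrow> real" where
  "S x = 1 + (g x)\<^sup>2 + (h x)\<^sup>2 + (\<Sum>i\<in>UNIV. (partial_deriv i g x)\<^sup>2) + (\<Sum>i\<in>UNIV. (partial_deriv i h x)\<^sup>2)
     + (\<Sum>i\<in>UNIV. \<Sum>j\<in>UNIV. (partial_deriv j (partial_deriv i g) x)\<^sup>2)
     + (\<Sum>i\<in>UNIV. \<Sum>j\<in>UNIV. (partial_deriv j (partial_deriv i h) x)\<^sup>2)"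

lemma S_meas[measurable]: "S \<in> borel_measurable borel"
  unfolding S_def by measurable

lemma S_int: "integrable M (\<lambda>\<omega>. S (X \<omega>))"
  unfolding S_def using g0 g1 g2 h0 h1 h2 by simp

lemma S_ge1: "1 \<le> S x"
  unfolding S_def by (simp add: sum_nonneg add_nonneg_nonneg)

lemma S_bounds:
  "\<bar>g x\<bar> \<le> sqrt (S x)" "\<bar>h x\<bar> \<le> sqrt (S x)"
  "\<bar>partial_deriv i g x\<bar> \<le> sqrt (S x)" "\<bar>partial_deriv i h x\<bar> \<le> sqrt (S x)"
  "\<bar>partial_deriv j (partial_deriv i g) x\<bar> \<le> sqrt (S x)"
  "\<bar>partial_deriv j (partial_deriv i h) x\<bar> \<le> sqrt (S x)"
proof -
  let ?a = "(g x)\<^sup>2" and ?b = "(h x)\<^sup>2" and ?c = "(\<Sum>i\<in>UNIV. (partial_deriv i g x)\<^sup>2)"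
    and ?d = "(\<Sum>i\<in>UNIV. (partial_deriv i h x)\<^sup>2)"
    and ?e = "(\<Sum>i\<in>UNIV. \<Sum>j\<in>UNIV. (partial_deriv j (partial_deriv i g) x)\<^sup>2)"
    and ?f = "(\<Sum>i\<in>UNIV. \<Sum>j\<in>UNIV. (partial_deriv j (partial_deriv i h) x)\<^sup>2)"
  have nn: "0 \<le> ?a" "0 \<le> ?b" "0 \<le> ?c" "0 \<le> ?d" "0 \<le> ?e" "0 \<le> ?f"
    by (auto intro!: sum_nonneg)
  have Se: "S x = 1 + ?a + ?b + ?c + ?d + ?e + ?f" by (simp add: S_def)
  have c: "(partial_deriv i g x)\<^sup>2 \<le> ?c" by (rule member_le_sum) auto
  have d: "(partial_deriv i h x)\<^sup>2 \<le> ?d" by (rule member_le_sum) auto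
  have e: "(partial_deriv j (partial_deriv i g) x)\<^sup>2 \<le> ?e"
  proof -
    have "(partial_deriv j (partial_deriv i g) x)\<^sup>2 \<le> (\<Sum>j\<in>UNIV. (partial_deriv j (partial_deriv i g) x)\<^sup>2)"
      by (rule member_le_sum) auto
    also have "\<dots> \<le> ?e" by (rule member_le_sum) (auto intro!: sum_nonneg)
    finally show ?thesis .
  qed
  have f: "(partial_deriv j (partial_deriv i h) x)\<^sup>2 \<le> ?f"
  proof -
    have "(partial_deriv j (partial_deriv i h) x)\<^sup>2 \<le> (\<Sum>j\<in>UNIV. (partial_deriv j (partial_deriv i h) x)\<^sup>2)"
      by (rule member_le_sum) auto
    also have "\<dots> \<le> ?f" by (rule member_le_sum) (auto intro!: sum_nonneg)
    finally show ?thesis .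
  qed
  show "\<bar>g x\<bar> \<le> sqrt (S x)" using nn by (intro sq_le_sqrt, unfold Se) linarith
  show "\<bar>h x\<bar> \<le> sqrt (S x)" using nn by (intro sq_le_sqrt, unfold Se) linarith
  show "\<bar>partial_deriv i g x\<bar> \<le> sqrt (S x)" using nn c by (intro sq_le_sqrt, unfold Se) linarith
  show "\<bar>partial_deriv i h x\<bar> \<le> sqrt (S x)" using nn d by (intro sq_le_sqrt, unfold Se) linarith
  show "\<bar>partial_deriv j (partial_deriv i g) x\<bar> \<le> sqrt (S x)" using nn e by (intro sq_le_sqrt, unfold Se) linarith
  show "\<bar>partial_deriv j (partial_deriv i h) x\<bar> \<le> sqrt (S x)" using nn f by (intro sq_le_sqrt, unfold Se) linarith
qed

end

context pair begin

definition Kg where "Kg = (SOME K. K \<ge> 0 \<and> (\<forall>x w \<sigma>. \<sigma> \<ge> 0 \<longrightarrow>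
     \<bar>g (x + \<sigma> *\<^sub>R w) - g x - \<sigma> * Lf g x w - \<sigma>\<^sup>2 * Qf g x w\<bar> \<le> K * \<sigma>^3 * norm w ^ 3))"
definition Kh where "Kh = (SOME K. K \<ge> 0 \<and> (\<forall>x w \<sigma>. \<sigma> \<ge> 0 \<longrightarrow>
     \<bar>h (x + \<sigma> *\<^sub>R w) - h x - \<sigma> * Lf h x w - \<sigma>\<^sup>2 * Qf h x w\<bar> \<le> K * \<sigma>^3 * norm w ^ 3))"

lemma Kg: "Kg \<ge> 0" "\<sigma> \<ge> 0 \<Longrightarrow> \<bar>g (x + \<sigma> *\<^sub>R w) - g x - \<sigma> * Lf g x w - \<sigma>\<^sup>2 * Qf g x w\<bar> \<le> Kg * \<sigma>^3 * norm w ^ 3"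
  using someI_ex[OF taylor_sigma[OF sg]] unfolding Kg_def by blast+

lemma Kh: "Kh \<ge> 0" "\<sigma> \<ge> 0 \<Longrightarrow> \<bar>h (x + \<sigma> *\<^sub>R w) - h x - \<sigma> * Lf h x w - \<sigma>\<^sup>2 * Qf h x w\<bar> \<le> Kh * \<sigma>^3 * norm w ^ 3"
  using someI_ex[OF taylor_sigma[OF sh]] unfolding Kh_def by blast+

definition cc :: real where "cc = (1 + real CARD('n))\<^sup>2"
definition Cst :: real where "Cst = 3*cc\<^sup>2 + 3*cc*Kg + 3*cc*Kh + Kg*Kh"

definition c1f where "c1f x w = (\<Sum>i\<in>UNIV. w$i * (g x * partial_deriv i h x + partial_deriv i g x * h x))"
definition c2f where "c2f x w = (\<Sum>i\<in>UNIV. \<Sum>j\<in>UNIV. (w$i * w$j) *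
   (partial_deriv i g x * partial_deriv j h x + 1/2 * (g x * partial_deriv j (partial_deriv i h) x + partial_deriv j (partial_deriv i g) x * h x)))"
definition Err where "Err \<sigma> x w = g (x + \<sigma> *\<^sub>R w) * h (x + \<sigma> *\<^sub>R w) - g x * h x - \<sigma> * c1f x w - \<sigma>\<^sup>2 * c2f x w"

lemma c1_eq: "c1f x w = g x * Lf h x w + Lf g x w * h x"
  unfolding c1f_def Lf_def by (simp add: sum_distrib_left sum_distrib_right sum.distrib algebra_simps)

lemma c2_eq: "c2f x w = Lf g x w * Lf h x w + g x * Qf h x w + Qf g x w * h x"
proof -
  have 1: "Lf g x w * Lf h x w = (\<Sum>i\<in>UNIV. \<Sum>j\<in>UNIV. (w$i * w$j) * (partial_deriv i g x * partial_deriv j h x))"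
    unfolding Lf_def sum_product by (simp add: algebra_simps)
  have 2: "g x * Qf h x w = (\<Sum>i\<in>UNIV. \<Sum>j\<in>UNIV. (w$i * w$j) * (1/2 * (g x * partial_deriv j (partial_deriv i h) x)))"
    unfolding Qf_def by (simp add: sum_distrib_left algebra_simps)
  have 3: "Qf g x w * h x = (\<Sum>i\<in>UNIV. \<Sum>j\<in>UNIV. (w$i * w$j) * (1/2 * (partial_deriv j (partial_deriv i g) x * h x)))"
    unfolding Qf_def by (simp add: sum_distrib_left sum_distrib_right algebra_simps)
  show ?thesis unfolding 1 2 3 c2f_def
    by (simp add: sum.distrib[symmetric] distrib_left add.assoc)
qed

lemma Lf_bound: "\<bar>Lf g x w\<bar> \<le> real CARD('n) * norm w * sqrt (S x)" "\<bar>Lf h x w\<bar> \<le> real CARD('n) * norm w * sqrt (S x)"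
  unfolding Lf_def by (intro sum_bound_card S_bounds)+

lemma Qf_bound:
  "\<bar>Qf g x w\<bar> \<le> 1/2 * (real CARD('n) * norm w * (real CARD('n) * norm w * sqrt (S x)))"
  "\<bar>Qf h x w\<bar> \<le> 1/2 * (real CARD('n) * norm w * (real CARD('n) * norm w * sqrt (S x)))"
  unfolding Qf_def abs_mult by (auto intro!: mult_left_mono sum_bound_card S_bounds)

lemma err_bound:
  assumes s: "0 < \<sigma>" "\<sigma> \<le> 1"
  shows "\<bar>Err \<sigma> x w\<bar> \<le> \<sigma>^3 * (Cst * ((1 + norm w)^6 * S x))"
proof -
  define n where "n = real CARD('n)"
  define N where "N = norm w"
  define r where "r = sqrt (S x)"
  define Y where "Y = (1+N)^3 * r"
  have r1: "1 \<le> r" using S_ge1[of x] by (simp add: r_def)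
  have n0: "0 \<le> n" "0 \<le> N" by (auto simp: n_def N_def)
  note AY = arith_Y[OF n0 r1]
  have cc: "cc = (1+n)\<^sup>2" by (simp add: cc_def n_def)
  have bA: "\<bar>g x\<bar> \<le> cc * Y" "\<bar>Lf g x w\<bar> \<le> cc * Y" "\<bar>Qf g x w\<bar> \<le> cc * Y"
           "\<bar>h x\<bar> \<le> cc * Y" "\<bar>Lf h x w\<bar> \<le> cc * Y" "\<bar>Qf h x w\<bar> \<le> cc * Y"
    using S_bounds(1,2)[of x] Lf_bound[of x w] Qf_bound[of x w] AY(1-3)
    unfolding cc Y_def r_def n_def N_def by (auto intro: order_trans)
  define Rg where "Rg = g (x + \<sigma> *\<^sub>R w) - g x - \<sigma> * Lf g x w - \<sigma>\<^sup>2 * Qf g x w"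
  define Rh where "Rh = h (x + \<sigma> *\<^sub>R w) - h x - \<sigma> * Lf h x w - \<sigma>\<^sup>2 * Qf h x w"
  have N3: "N^3 \<le> Y" using AY(4) by (simp add: Y_def)
  have bR: "\<bar>Rg\<bar> \<le> Kg * \<sigma>^3 * Y" "\<bar>Rh\<bar> \<le> Kh * \<sigma>^3 * Y"
  proof -
    have "Kg * \<sigma>^3 * N^3 \<le> Kg * \<sigma>^3 * Y" using N3 Kg(1) s by (intro mult_left_mono) auto
    then show "\<bar>Rg\<bar> \<le> Kg * \<sigma>^3 * Y" using Kg(2)[of \<sigma> x w] s unfolding Rg_def N_def by linarith
    have "Kh * \<sigma>^3 * N^3 \<le> Kh * \<sigma>^3 * Y" using N3 Kh(1) s by (intro mult_left_mono) auto
    then show "\<bar>Rh\<bar> \<le> Kh * \<sigma>^3 * Y" using Kh(2)[of \<sigma> x w] s unfolding Rh_def N_def by linarith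
  qed
  have id: "Err \<sigma> x w = \<sigma>^3*(Lf g x w*Qf h x w + Qf g x w*Lf h x w) + \<sigma>^4*(Qf g x w*Qf h x w)
     + Rg*(h x + \<sigma>*Lf h x w + \<sigma>\<^sup>2*Qf h x w + Rh) + (g x + \<sigma>*Lf g x w + \<sigma>\<^sup>2*Qf g x w)*Rh"
    unfolding Err_def c1_eq c2_eq
    by (rule err_identity) (simp_all add: Rg_def Rh_def)
  have "\<bar>Err \<sigma> x w\<bar> \<le> \<sigma>^3*(3*(cc*Y)\<^sup>2) + (Kg*\<sigma>^3*Y)*(3*(cc*Y) + Kh*\<sigma>^3*Y) + 3*(cc*Y)*(Kh*\<sigma>^3*Y)"
    unfolding id by (rule err_arith[OF s bA bR])
  also have "\<dots> \<le> \<sigma>^3 * ((3*cc\<^sup>2 + 3*cc*Kg + 3*cc*Kh + Kg*Kh) * Y\<^sup>2)"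
    using final_arith[OF s _ Kg(1) Kh(1), of cc Y] by (simp add: cc_def mult.assoc)
  also have "Y\<^sup>2 = (1 + norm w)^6 * S x"
    using S_ge1[of x] by (simp add: Y_def r_def N_def power_mult_distrib flip: power_mult)
  finally show ?thesis by (simp add: Cst_def)
qed

end

lemma vec_nth_meas[measurable (raw)]:
  "f \<in> borel_measurable N \<Longrightarrow> (\<lambda>x. (f x :: real^'n::finite) $ i) \<in> borel_measurable N"
  by (rule borel_measurable_continuous_on[of "\<lambda>v. v $ i"]) (auto intro: continuous_on_component continuous_on_id)

lemma ev_01: "\<forall>\<^sub>F s in at_right (0::real). 0 < s \<and> s < 1"
  unfolding eventually_at_right_field by (intro exI[of _ 1]) auto

context pair begin

lemma Err_meas[measurable]: "(\<lambda>\<omega>. Err \<sigma> (X \<omega>) (W \<omega>)) \<in> borel_measurable M"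
  unfolding Err_def c1f_def c2f_def by measurable

lemma gh_int: "integrable M (\<lambda>\<omega>. g (X \<omega>) * h (X \<omega>))"
  by (rule sq_prod[OF _ _ g0 h0]) measurable

lemma phi1_int: "integrable M (\<lambda>\<omega>. g (X \<omega>) * partial_deriv i h (X \<omega>) + partial_deriv i g (X \<omega>) * h (X \<omega>))"
proof -
  have "integrable M (\<lambda>\<omega>. g (X \<omega>) * partial_deriv i h (X \<omega>))" by (rule sq_prod[OF _ _ g0 h1]) measurable
  moreover have "integrable M (\<lambda>\<omega>. partial_deriv i g (X \<omega>) * h (X \<omega>))" by (rule sq_prod[OF _ _ g1 h0]) measurable
  ultimately show ?thesis by simp
qed

lemma phi2_int: "integrable M (\<lambda>\<omega>. partial_deriv i g (X \<omega>) * partial_deriv j h (X \<omega>) + 1/2 * (g (X \<omega>) * partial_deriv j (partial_deriv i h) (X \<omega>) + partial_deriv j (partial_deriv i g) (X \<omega>) * h (X \<omega>)))"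
proof -
  have "integrable M (\<lambda>\<omega>. partial_deriv i g (X \<omega>) * partial_deriv j h (X \<omega>))" by (rule sq_prod[OF _ _ g1 h1]) measurable
  moreover have "integrable M (\<lambda>\<omega>. g (X \<omega>) * partial_deriv j (partial_deriv i h) (X \<omega>))" by (rule sq_prod[OF _ _ g0 h2]) measurable
  moreover have "integrable M (\<lambda>\<omega>. partial_deriv j (partial_deriv i g) (X \<omega>) * h (X \<omega>))" by (rule sq_prod[OF _ _ g2 h0]) measurable
  ultimately show ?thesis by simp
qed

lemma c1_int: "integrable M (\<lambda>\<omega>. c1f (X \<omega>) (W \<omega>))" "(\<integral>\<omega>. c1f (X \<omega>) (W \<omega>) \<partial>M) = 0"
  unfolding c1f_def
  by (rule E_c1[of "\<lambda>i x. g x * partial_deriv i h x + partial_deriv i g x * h x", OF _ phi1_int], measurable)+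

lemma c2_int: "integrable M (\<lambda>\<omega>. c2f (X \<omega>) (W \<omega>))"
  "(\<integral>\<omega>. c2f (X \<omega>) (W \<omega>) \<partial>M) = (\<Sum>i\<in>UNIV. \<integral>\<omega>. partial_deriv i g (X \<omega>) * partial_deriv i h (X \<omega>) + 1/2 * (g (X \<omega>) * partial_deriv i (partial_deriv i h) (X \<omega>) + partial_deriv i (partial_deriv i g) (X \<omega>) * h (X \<omega>)) \<partial>M)"
  unfolding c2f_def
  by (rule E_c2[of "\<lambda>i j x. partial_deriv i g x * partial_deriv j h x + 1/2 * (g x * partial_deriv j (partial_deriv i h) x + partial_deriv j (partial_deriv i g) x * h x)", OF _ phi2_int], measurable)+

lemma Cst_nn: "0 \<le> Cst"
  unfolding Cst_def cc_def using Kg(1) Kh(1) by simp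

definition Dm where "Dm \<omega> = Cst * ((1 + norm (W \<omega>))^6 * S (X \<omega>))"

lemma D_int: "integrable M Dm"
proof -
  have "integrable M (\<lambda>\<omega>. (1 + norm (W \<omega>))^6 * S (X \<omega>))"
    by (rule indep_prod(1)[OF S_meas _ S_int W_poly]) measurable
  then show ?thesis unfolding Dm_def by simp
qed

lemma D_nn: "0 \<le> Dm \<omega>"
  unfolding Dm_def using Cst_nn S_ge1[of "X \<omega>"] by simp

lemma fixed_s:
  assumes s: "0 < s" "s < 1"
  shows "integrable M (\<lambda>\<omega>. g (X \<omega> + sqrt s *\<^sub>R W \<omega>) * h (X \<omega> + sqrt s *\<^sub>R W \<omega>))"
    and "\<bar>((\<integral>\<omega>. g (X \<omega> + sqrt s *\<^sub>R W \<omega>) * h (X \<omega> + sqrt s *\<^sub>R W \<omega>) \<partial>M) - (\<integral>\<omega>. g (X \<omega>) * h (X \<omega>) \<partial>M)) / s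
            - (\<integral>\<omega>. c2f (X \<omega>) (W \<omega>) \<partial>M)\<bar> \<le> sqrt s * (\<integral>\<omega>. Dm \<omega> \<partial>M)"
proof -
  define \<sigma> where "\<sigma> = sqrt s"
  have sg: "0 < \<sigma>" "\<sigma> \<le> 1" "\<sigma>\<^sup>2 = s" using s by (auto simp: \<sigma>_def)
  have bnd: "\<bar>Err \<sigma> (X \<omega>) (W \<omega>)\<bar> \<le> \<sigma>^3 * Dm \<omega>" for \<omega>
    using err_bound[OF sg(1,2)] by (simp add: Dm_def)
  have Dint3: "integrable M (\<lambda>\<omega>. \<sigma>^3 * Dm \<omega>)" using D_int by simp
  have errint: "integrable M (\<lambda>\<omega>. Err \<sigma> (X \<omega>) (W \<omega>))"
  proof (rule Bochner_Integration.integrable_bound[OF Dint3])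
    show "AE x in M. norm (Err \<sigma> (X x) (W x)) \<le> norm (\<sigma>^3 * Dm x)"
      using bnd by (auto intro: order_trans[OF _ abs_ge_self])
  qed measurable
  have dec: "g (X \<omega> + \<sigma> *\<^sub>R W \<omega>) * h (X \<omega> + \<sigma> *\<^sub>R W \<omega>)
     = g (X \<omega>) * h (X \<omega>) + \<sigma> * c1f (X \<omega>) (W \<omega>) + \<sigma>\<^sup>2 * c2f (X \<omega>) (W \<omega>) + Err \<sigma> (X \<omega>) (W \<omega>)" for \<omega>
    unfolding Err_def by (simp add: algebra_simps)
  have I1: "integrable M (\<lambda>\<omega>. g (X \<omega>) * h (X \<omega>) + \<sigma> * c1f (X \<omega>) (W \<omega>) + \<sigma>\<^sup>2 * c2f (X \<omega>) (W \<omega>) + Err \<sigma> (X \<omega>) (W \<omega>))"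
    using gh_int c1_int(1) c2_int(1) errint by simp
  have decf: "(\<lambda>\<omega>. g (X \<omega> + \<sigma> *\<^sub>R W \<omega>) * h (X \<omega> + \<sigma> *\<^sub>R W \<omega>))
     = (\<lambda>\<omega>. g (X \<omega>) * h (X \<omega>) + \<sigma> * c1f (X \<omega>) (W \<omega>) + \<sigma>\<^sup>2 * c2f (X \<omega>) (W \<omega>) + Err \<sigma> (X \<omega>) (W \<omega>))"
    using dec by (intro ext)
  show "integrable M (\<lambda>\<omega>. g (X \<omega> + sqrt s *\<^sub>R W \<omega>) * h (X \<omega> + sqrt s *\<^sub>R W \<omega>))"
    unfolding \<sigma>_def[symmetric] by (subst decf) (rule I1)
  have "(\<integral>\<omega>. g (X \<omega> + \<sigma> *\<^sub>R W \<omega>) * h (X \<omega> + \<sigma> *\<^sub>R W \<omega>) \<partial>M)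
     = (\<integral>\<omega>. g (X \<omega>) * h (X \<omega>) \<partial>M) + \<sigma> * (\<integral>\<omega>. c1f (X \<omega>) (W \<omega>) \<partial>M) + \<sigma>\<^sup>2 * (\<integral>\<omega>. c2f (X \<omega>) (W \<omega>) \<partial>M) + (\<integral>\<omega>. Err \<sigma> (X \<omega>) (W \<omega>) \<partial>M)"
  proof -
    have "(\<integral>\<omega>. g (X \<omega> + \<sigma> *\<^sub>R W \<omega>) * h (X \<omega> + \<sigma> *\<^sub>R W \<omega>) \<partial>M)
      = (\<integral>\<omega>. g (X \<omega>) * h (X \<omega>) + \<sigma> * c1f (X \<omega>) (W \<omega>) + \<sigma>\<^sup>2 * c2f (X \<omega>) (W \<omega>) + Err \<sigma> (X \<omega>) (W \<omega>) \<partial>M)"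
      by (subst decf) (rule refl)
    also have "\<dots> = (\<integral>\<omega>. g (X \<omega>) * h (X \<omega>) + \<sigma> * c1f (X \<omega>) (W \<omega>) + \<sigma>\<^sup>2 * c2f (X \<omega>) (W \<omega>) \<partial>M) + (\<integral>\<omega>. Err \<sigma> (X \<omega>) (W \<omega>) \<partial>M)"
      using gh_int c1_int(1) c2_int(1) errint by (intro Bochner_Integration.integral_add) auto
    also have "(\<integral>\<omega>. g (X \<omega>) * h (X \<omega>) + \<sigma> * c1f (X \<omega>) (W \<omega>) + \<sigma>\<^sup>2 * c2f (X \<omega>) (W \<omega>) \<partial>M)
       = (\<integral>\<omega>. g (X \<omega>) * h (X \<omega>) + \<sigma> * c1f (X \<omega>) (W \<omega>) \<partial>M) + (\<integral>\<omega>. \<sigma>\<^sup>2 * c2f (X \<omega>) (W \<omega>) \<partial>M)"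
      using gh_int c1_int(1) c2_int(1) by (intro Bochner_Integration.integral_add) auto
    also have "(\<integral>\<omega>. g (X \<omega>) * h (X \<omega>) + \<sigma> * c1f (X \<omega>) (W \<omega>) \<partial>M)
       = (\<integral>\<omega>. g (X \<omega>) * h (X \<omega>) \<partial>M) + (\<integral>\<omega>. \<sigma> * c1f (X \<omega>) (W \<omega>) \<partial>M)"
      using gh_int c1_int(1) by (intro Bochner_Integration.integral_add) auto
    finally show ?thesis by simp
  qed
  then have eqE: "(\<integral>\<omega>. g (X \<omega> + \<sigma> *\<^sub>R W \<omega>) * h (X \<omega> + \<sigma> *\<^sub>R W \<omega>) \<partial>M) - (\<integral>\<omega>. g (X \<omega>) * h (X \<omega>) \<partial>M)
     = s * (\<integral>\<omega>. c2f (X \<omega>) (W \<omega>) \<partial>M) + (\<integral>\<omega>. Err \<sigma> (X \<omega>) (W \<omega>) \<partial>M)"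
    using c1_int(2) sg(3) by simp
  have aE: "\<bar>\<integral>\<omega>. Err \<sigma> (X \<omega>) (W \<omega>) \<partial>M\<bar> \<le> \<sigma>^3 * (\<integral>\<omega>. Dm \<omega> \<partial>M)"
  proof -
    have "\<bar>\<integral>\<omega>. Err \<sigma> (X \<omega>) (W \<omega>) \<partial>M\<bar> \<le> (\<integral>\<omega>. norm (Err \<sigma> (X \<omega>) (W \<omega>)) \<partial>M)"
      using integral_norm_bound[of M "\<lambda>\<omega>. Err \<sigma> (X \<omega>) (W \<omega>)"] by simp
    also have "\<dots> \<le> (\<integral>\<omega>. \<sigma>^3 * Dm \<omega> \<partial>M)"
      using bnd by (intro integral_mono Dint3) (auto simp: errint)
    also have "\<dots> = \<sigma>^3 * (\<integral>\<omega>. Dm \<omega> \<partial>M)" by simp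
    finally show ?thesis .
  qed
  have "((\<integral>\<omega>. g (X \<omega> + \<sigma> *\<^sub>R W \<omega>) * h (X \<omega> + \<sigma> *\<^sub>R W \<omega>) \<partial>M) - (\<integral>\<omega>. g (X \<omega>) * h (X \<omega>) \<partial>M)) / s
            - (\<integral>\<omega>. c2f (X \<omega>) (W \<omega>) \<partial>M) = (\<integral>\<omega>. Err \<sigma> (X \<omega>) (W \<omega>) \<partial>M) / s"
    unfolding eqE using s by (simp add: field_simps)
  also have "\<bar>\<dots>\<bar> \<le> \<sigma>^3 * (\<integral>\<omega>. Dm \<omega> \<partial>M) / s"
    using aE s by (simp add: divide_right_mono)
  also have "\<sigma>^3 * (\<integral>\<omega>. Dm \<omega> \<partial>M) / s = \<sigma> * (\<integral>\<omega>. Dm \<omega> \<partial>M)"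
  proof -
    have "\<sigma>^3 = \<sigma> * s" using sg(3) by (simp add: power3_eq_cube power2_eq_square)
    then show ?thesis using s by simp
  qed
  finally show "\<bar>((\<integral>\<omega>. g (X \<omega> + sqrt s *\<^sub>R W \<omega>) * h (X \<omega> + sqrt s *\<^sub>R W \<omega>) \<partial>M) - (\<integral>\<omega>. g (X \<omega>) * h (X \<omega>) \<partial>M)) / s
            - (\<integral>\<omega>. c2f (X \<omega>) (W \<omega>) \<partial>M)\<bar> \<le> sqrt s * (\<integral>\<omega>. Dm \<omega> \<partial>M)"
    unfolding \<sigma>_def .
qed

lemma K2:
  shows "\<forall>\<^sub>F s in at_right 0. integrable M (\<lambda>\<omega>. g (X \<omega> + sqrt s *\<^sub>R W \<omega>) * h (X \<omega> + sqrt s *\<^sub>R W \<omega>))"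
    and "((\<lambda>s. ((\<integral>\<omega>. g (X \<omega> + sqrt s *\<^sub>R W \<omega>) * h (X \<omega> + sqrt s *\<^sub>R W \<omega>) \<partial>M) - (\<integral>\<omega>. g (X \<omega>) * h (X \<omega>) \<partial>M)) / s)
          \<longlongrightarrow> (\<integral>\<omega>. c2f (X \<omega>) (W \<omega>) \<partial>M)) (at_right 0)"
proof -
  show "\<forall>\<^sub>F s in at_right 0. integrable M (\<lambda>\<omega>. g (X \<omega> + sqrt s *\<^sub>R W \<omega>) * h (X \<omega> + sqrt s *\<^sub>R W \<omega>))"
    using ev_01 by (rule eventually_mono) (rule fixed_s(1); simp)
  have t: "((\<lambda>s::real. sqrt s * (\<integral>\<omega>. Dm \<omega> \<partial>M)) \<longlongrightarrow> 0) (at_right 0)"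
  proof -
    have "((\<lambda>s::real. sqrt s) \<longlongrightarrow> sqrt 0) (at_right 0)"
      by (intro tendsto_intros)
    then have "((\<lambda>s::real. sqrt s) \<longlongrightarrow> 0) (at_right 0)" by simp
    from tendsto_mult_right_zero[OF this, of "\<integral>\<omega>. Dm \<omega> \<partial>M"] show ?thesis by (simp add: mult.commute)
  qed
  show "((\<lambda>s. ((\<integral>\<omega>. g (X \<omega> + sqrt s *\<^sub>R W \<omega>) * h (X \<omega> + sqrt s *\<^sub>R W \<omega>) \<partial>M) - (\<integral>\<omega>. g (X \<omega>) * h (X \<omega>) \<partial>M)) / s)
          \<longlongrightarrow> (\<integral>\<omega>. c2f (X \<omega>) (W \<omega>) \<partial>M)) (at_right 0)"
    apply (rule LIM_zero_cancel)
    apply (rule Lim_null_comparison[OF _ t])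
    using ev_01 proof (rule eventually_mono)
    fix s :: real assume "0 < s \<and> s < 1"
    then show "norm (((\<integral>\<omega>. g (X \<omega> + sqrt s *\<^sub>R W \<omega>) * h (X \<omega> + sqrt s *\<^sub>R W \<omega>) \<partial>M) - (\<integral>\<omega>. g (X \<omega>) * h (X \<omega>) \<partial>M)) / s
            - (\<integral>\<omega>. c2f (X \<omega>) (W \<omega>) \<partial>M)) \<le> sqrt s * (\<integral>\<omega>. Dm \<omega> \<partial>M)"
      using fixed_s(2)[of s] by simp
  qed
qed

end

lemma deriv_const0: "deriv (\<lambda>t::real. c::real) x = 0"
  by (rule DERIV_imp_deriv) simp

lemma partial_const[simp]: "partial_deriv i (\<lambda>x. c) = (\<lambda>x. 0)"
  unfolding partial_deriv_def by (simp add: fun_eq_iff deriv_const0)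

lemma C3_const: "C3_bounded_third (\<lambda>x::real^'n::finite. c)"
  unfolding C3_bounded_third_def has_partials_def by simp

lemma laplacian_const[simp]: "laplacian (\<lambda>x. c) = (\<lambda>x. 0)"
  unfolding laplacian_def by (simp add: fun_eq_iff)

context pair begin

lemma lap_int: "integrable M (\<lambda>\<omega>. laplacian g (X \<omega>))" "integrable M (\<lambda>\<omega>. laplacian h (X \<omega>))"
proof -
  have "integrable M (\<lambda>\<omega>. partial_deriv i (partial_deriv i g) (X \<omega>))" for i by (rule sq_int1[OF _ g2]) measurable
  then show "integrable M (\<lambda>\<omega>. laplacian g (X \<omega>))" unfolding laplacian_def by simp
  have "integrable M (\<lambda>\<omega>. partial_deriv i (partial_deriv i h) (X \<omega>))" for i by (rule sq_int1[OF _ h2]) measurable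
  then show "integrable M (\<lambda>\<omega>. laplacian h (X \<omega>))" unfolding laplacian_def by simp
qed

lemma lap_prod_int: "integrable M (\<lambda>\<omega>. g (X \<omega>) * laplacian h (X \<omega>))" "integrable M (\<lambda>\<omega>. h (X \<omega>) * laplacian g (X \<omega>))"
  "integrable M (\<lambda>\<omega>. laplacian g (X \<omega>) * h (X \<omega>))"
proof -
  have "integrable M (\<lambda>\<omega>. g (X \<omega>) * partial_deriv i (partial_deriv i h) (X \<omega>))" for i by (rule sq_prod[OF _ _ g0 h2]) measurable
  then show "integrable M (\<lambda>\<omega>. g (X \<omega>) * laplacian h (X \<omega>))" unfolding laplacian_def by (simp add: sum_distrib_left)
  have "integrable M (\<lambda>\<omega>. h (X \<omega>) * partial_deriv i (partial_deriv i g) (X \<omega>))" for i by (rule sq_prod[OF _ _ h0 g2]) measurable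
  then show "integrable M (\<lambda>\<omega>. h (X \<omega>) * laplacian g (X \<omega>))" unfolding laplacian_def by (simp add: sum_distrib_left)
  then show "integrable M (\<lambda>\<omega>. laplacian g (X \<omega>) * h (X \<omega>))" by (simp add: mult.commute)
qed

lemma c2_val: "(\<integral>\<omega>. c2f (X \<omega>) (W \<omega>) \<partial>M) =
   (\<integral>\<omega>. (\<Sum>i\<in>UNIV. partial_deriv i g (X \<omega>) * partial_deriv i h (X \<omega>)) \<partial>M)
   + 1/2 * ((\<integral>\<omega>. g (X \<omega>) * laplacian h (X \<omega>) \<partial>M) + (\<integral>\<omega>. laplacian g (X \<omega>) * h (X \<omega>) \<partial>M))"
proof -
  have ia: "integrable M (\<lambda>\<omega>. partial_deriv i g (X \<omega>) * partial_deriv i h (X \<omega>))" for i by (rule sq_prod[OF _ _ g1 h1]) measurable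
  have ib: "integrable M (\<lambda>\<omega>. g (X \<omega>) * partial_deriv i (partial_deriv i h) (X \<omega>))" for i by (rule sq_prod[OF _ _ g0 h2]) measurable
  have ic: "integrable M (\<lambda>\<omega>. partial_deriv i (partial_deriv i g) (X \<omega>) * h (X \<omega>))" for i by (rule sq_prod[OF _ _ g2 h0]) measurable
  have "(\<integral>\<omega>. c2f (X \<omega>) (W \<omega>) \<partial>M) = (\<Sum>i\<in>UNIV. (\<integral>\<omega>. partial_deriv i g (X \<omega>) * partial_deriv i h (X \<omega>) \<partial>M)
      + 1/2 * ((\<integral>\<omega>. g (X \<omega>) * partial_deriv i (partial_deriv i h) (X \<omega>) \<partial>M) + (\<integral>\<omega>. partial_deriv i (partial_deriv i g) (X \<omega>) * h (X \<omega>) \<partial>M)))"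
    unfolding c2_int(2) using ia ib ic by (simp add: Bochner_Integration.integral_add)
  also have "\<dots> = (\<Sum>i\<in>UNIV. \<integral>\<omega>. partial_deriv i g (X \<omega>) * partial_deriv i h (X \<omega>) \<partial>M)
      + 1/2 * ((\<Sum>i\<in>UNIV. \<integral>\<omega>. g (X \<omega>) * partial_deriv i (partial_deriv i h) (X \<omega>) \<partial>M) + (\<Sum>i\<in>UNIV. \<integral>\<omega>. partial_deriv i (partial_deriv i g) (X \<omega>) * h (X \<omega>) \<partial>M))"
    by (simp only: sum.distrib sum_distrib_left[symmetric])
  also have "\<dots> = (\<integral>\<omega>. (\<Sum>i\<in>UNIV. partial_deriv i g (X \<omega>) * partial_deriv i h (X \<omega>)) \<partial>M)
      + 1/2 * ((\<integral>\<omega>. (\<Sum>i\<in>UNIV. g (X \<omega>) * partial_deriv i (partial_deriv i h) (X \<omega>)) \<partial>M) + (\<integral>\<omega>. (\<Sum>i\<in>UNIV. partial_deriv i (partial_deriv i g) (X \<omega>) * h (X \<omega>)) \<partial>M))"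
    using ia ib ic by (simp add: integral_sum)
  also have "\<dots> = (\<integral>\<omega>. (\<Sum>i\<in>UNIV. partial_deriv i g (X \<omega>) * partial_deriv i h (X \<omega>)) \<partial>M)
   + 1/2 * ((\<integral>\<omega>. g (X \<omega>) * laplacian h (X \<omega>) \<partial>M) + (\<integral>\<omega>. laplacian g (X \<omega>) * h (X \<omega>) \<partial>M))"
    unfolding laplacian_def by (simp add: sum_distrib_left sum_distrib_right)
  finally show ?thesis .
qed

end

lemma pair_const:
  assumes "setting M X W" "C3_bounded_third g" "integrable M (\<lambda>\<omega>. (g (X \<omega>))\<^sup>2)"
    "\<And>i. integrable M (\<lambda>\<omega>. (partial_deriv i g (X \<omega>))\<^sup>2)"
    "\<And>i j. integrable M (\<lambda>\<omega>. (partial_deriv j (partial_deriv i g) (X \<omega>))\<^sup>2)"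
  shows "pair M X W g (\<lambda>x. 1)"
proof -
  interpret setting M X W by fact
  show ?thesis by unfold_locales (use assms C3_const in auto)
qed

theorem mainTheorem6:
  fixes M :: "'o measure"
    and X W :: "'o \<Rightarrow> real^'n::finite"
    and f :: "'m::finite \<Rightarrow> real^'n \<Rightarrow> real"
  assumes M: "prob_space M"
    and X: "X \<in> borel_measurable M"
    and W: "W \<in> borel_measurable M"
    and indep: "prob_space.indep_var M borel X borel W"
    and smooth: "\<And>a. C3_bounded_third (f a)"
    and mom0: "\<And>a. integrable M (\<lambda>\<omega>. (f a (X \<omega>))\<^sup>2)"
    and mom1: "\<And>a i. integrable M (\<lambda>\<omega>. (partial_deriv i (f a) (X \<omega>))\<^sup>2)"
    and mom2: "\<And>a i j. integrable M (\<lambda>\<omega>. (partial_deriv j (partial_deriv i (f a)) (X \<omega>))\<^sup>2)"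
    and W_mean: "\<And>i. (\<integral>\<omega>. W \<omega> $ i \<partial>M) = 0"
    and W_var: "\<And>i j. covar M (\<lambda>\<omega>. W \<omega> $ i) (\<lambda>\<omega>. W \<omega> $ j) = (if i = j then 1 else 0)"
    and W_moments: "\<And>k::nat. integrable M (\<lambda>\<omega>. norm (W \<omega>) ^ k)"
  shows "(\<forall>a b.
           ((\<lambda>s. (covar M (\<lambda>\<omega>. f a (X \<omega> + sqrt s *\<^sub>R W \<omega>)) (\<lambda>\<omega>. f b (X \<omega> + sqrt s *\<^sub>R W \<omega>))
                    - covar M (\<lambda>\<omega>. f a (X \<omega>)) (\<lambda>\<omega>. f b (X \<omega>))) / s)
            \<longlongrightarrow> wasserstein_cov M X f a b
                 + (1/2) * (covar M (\<lambda>\<omega>. f a (X \<omega>)) (\<lambda>\<omega>. laplacian (f b) (X \<omega>))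
                          + covar M (\<lambda>\<omega>. f b (X \<omega>)) (\<lambda>\<omega>. laplacian (f a) (X \<omega>)))) (at_right 0))
         \<and> ((\<forall>a. \<exists>c. \<forall>x. laplacian (f a) x = c) \<longrightarrow>
         (\<forall>a b.
           ((\<lambda>s. (covar M (\<lambda>\<omega>. f a (X \<omega> + sqrt s *\<^sub>R W \<omega>)) (\<lambda>\<omega>. f b (X \<omega> + sqrt s *\<^sub>R W \<omega>))
                    - covar M (\<lambda>\<omega>. f a (X \<omega>)) (\<lambda>\<omega>. f b (X \<omega>))) / s)
            \<longlongrightarrow> wasserstein_cov M X f a b) (at_right 0)))"
proof -
  have set: "setting M X W"
    unfolding setting_def setting_axioms_def using M X W indep W_mean W_var W_moments by auto
  have pr: "pair M X W (f a) (f b)" for a b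
    using set smooth mom0 mom1 mom2 unfolding pair_def pair_axioms_def by auto
  have pc: "pair M X W (f a) (\<lambda>x. 1)" for a
    by (rule pair_const[OF set smooth mom0 mom1 mom2])
  interpret S: setting M X W by (rule set)
  have main: "((\<lambda>s. (covar M (\<lambda>\<omega>. f a (X \<omega> + sqrt s *\<^sub>R W \<omega>)) (\<lambda>\<omega>. f b (X \<omega> + sqrt s *\<^sub>R W \<omega>))
                    - covar M (\<lambda>\<omega>. f a (X \<omega>)) (\<lambda>\<omega>. f b (X \<omega>))) / s)
            \<longlongrightarrow> wasserstein_cov M X f a b
                 + (1/2) * (covar M (\<lambda>\<omega>. f a (X \<omega>)) (\<lambda>\<omega>. laplacian (f b) (X \<omega>))
                          + covar M (\<lambda>\<omega>. f b (X \<omega>)) (\<lambda>\<omega>. laplacian (f a) (X \<omega>)))) (at_right 0)" for a b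
  proof -
    interpret P: pair M X W "f a" "f b" by (rule pr)
    interpret Pa: pair M X W "f a" "\<lambda>x. 1" by (rule pc)
    interpret Pb: pair M X W "f b" "\<lambda>x. 1" by (rule pc)
    define A where "A s = (\<integral>\<omega>. f a (X \<omega> + sqrt s *\<^sub>R W \<omega>) * f b (X \<omega> + sqrt s *\<^sub>R W \<omega>) \<partial>M)" for s
    define ma where "ma s = (\<integral>\<omega>. f a (X \<omega> + sqrt s *\<^sub>R W \<omega>) \<partial>M)" for s
    define mb where "mb s = (\<integral>\<omega>. f b (X \<omega> + sqrt s *\<^sub>R W \<omega>) \<partial>M)" for s
    define A0 where "A0 = (\<integral>\<omega>. f a (X \<omega>) * f b (X \<omega>) \<partial>M)"
    define ma0 where "ma0 = (\<integral>\<omega>. f a (X \<omega>) \<partial>M)"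
    define mb0 where "mb0 = (\<integral>\<omega>. f b (X \<omega>) \<partial>M)"
    define Wc where "Wc = wasserstein_cov M X f a b"
    define Lab where "Lab = (\<integral>\<omega>. f a (X \<omega>) * laplacian (f b) (X \<omega>) \<partial>M)"
    define Lba where "Lba = (\<integral>\<omega>. f b (X \<omega>) * laplacian (f a) (X \<omega>) \<partial>M)"
    define la where "la = (\<integral>\<omega>. laplacian (f a) (X \<omega>) \<partial>M)"
    define lb where "lb = (\<integral>\<omega>. laplacian (f b) (X \<omega>) \<partial>M)"
    have Lba': "(\<integral>\<omega>. laplacian (f a) (X \<omega>) * f b (X \<omega>) \<partial>M) = Lba"
      unfolding Lba_def by (simp add: mult.commute)
    have tA: "((\<lambda>s. (A s - A0) / s) \<longlongrightarrow> Wc + 1/2 * (Lab + Lba)) (at_right 0)"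
      using P.K2(2) unfolding P.c2_val A_def A0_def Wc_def Lab_def Lba' wasserstein_cov_def .
    have ta: "((\<lambda>s. (ma s - ma0) / s) \<longlongrightarrow> 1/2 * la) (at_right 0)"
      using Pa.K2(2) unfolding Pa.c2_val by (simp add: ma_def ma0_def la_def)
    have tb: "((\<lambda>s. (mb s - mb0) / s) \<longlongrightarrow> 1/2 * lb) (at_right 0)"
      using Pb.K2(2) unfolding Pb.c2_val by (simp add: mb_def mb0_def lb_def)
    have c0: "covar M (\<lambda>\<omega>. f a (X \<omega>)) (\<lambda>\<omega>. f b (X \<omega>)) = A0 - ma0 * mb0"
      unfolding A0_def ma0_def mb0_def
      by (rule covar_expand[OF M S.sq_int1[OF _ mom0] S.sq_int1[OF _ mom0] P.gh_int]) (use P.meas in auto)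
    have cab: "covar M (\<lambda>\<omega>. f a (X \<omega>)) (\<lambda>\<omega>. laplacian (f b) (X \<omega>)) = Lab - ma0 * lb"
      unfolding Lab_def ma0_def lb_def
      by (rule covar_expand[OF M S.sq_int1[OF _ mom0] P.lap_int(2) P.lap_prod_int(1)]) (use P.meas in auto)
    have cba: "covar M (\<lambda>\<omega>. f b (X \<omega>)) (\<lambda>\<omega>. laplacian (f a) (X \<omega>)) = Lba - mb0 * la"
      unfolding Lba_def mb0_def la_def
      by (rule covar_expand[OF M S.sq_int1[OF _ mom0] P.lap_int(1) P.lap_prod_int(2)]) (use P.meas in auto)
    have ev: "\<forall>\<^sub>F s in at_right 0.
      (A s - A0) / s - ((ma0 + s * ((ma s - ma0) / s)) * ((mb s - mb0) / s) + mb0 * ((ma s - ma0) / s))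
      = (covar M (\<lambda>\<omega>. f a (X \<omega> + sqrt s *\<^sub>R W \<omega>)) (\<lambda>\<omega>. f b (X \<omega> + sqrt s *\<^sub>R W \<omega>))
                    - covar M (\<lambda>\<omega>. f a (X \<omega>)) (\<lambda>\<omega>. f b (X \<omega>))) / s"
      using ev_01
    proof (rule eventually_mono)
      fix s :: real assume s: "0 < s \<and> s < 1"
      have ia: "integrable M (\<lambda>\<omega>. f a (X \<omega> + sqrt s *\<^sub>R W \<omega>))" using Pa.fixed_s(1)[of s] s by simp
      have ib: "integrable M (\<lambda>\<omega>. f b (X \<omega> + sqrt s *\<^sub>R W \<omega>))" using Pb.fixed_s(1)[of s] s by simp
      have iab: "integrable M (\<lambda>\<omega>. f a (X \<omega> + sqrt s *\<^sub>R W \<omega>) * f b (X \<omega> + sqrt s *\<^sub>R W \<omega>))"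
        using P.fixed_s(1)[of s] s by simp
      have cs: "covar M (\<lambda>\<omega>. f a (X \<omega> + sqrt s *\<^sub>R W \<omega>)) (\<lambda>\<omega>. f b (X \<omega> + sqrt s *\<^sub>R W \<omega>)) = A s - ma s * mb s"
        unfolding A_def ma_def mb_def by (rule covar_expand[OF M ia ib iab])
      show "(A s - A0) / s - ((ma0 + s * ((ma s - ma0) / s)) * ((mb s - mb0) / s) + mb0 * ((ma s - ma0) / s))
      = (covar M (\<lambda>\<omega>. f a (X \<omega> + sqrt s *\<^sub>R W \<omega>)) (\<lambda>\<omega>. f b (X \<omega> + sqrt s *\<^sub>R W \<omega>))
                    - covar M (\<lambda>\<omega>. f a (X \<omega>)) (\<lambda>\<omega>. f b (X \<omega>))) / s"
        unfolding cs c0 using s by (simp add: field_simps)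
    qed
    have lim: "((\<lambda>s. (A s - A0) / s - ((ma0 + s * ((ma s - ma0) / s)) * ((mb s - mb0) / s) + mb0 * ((ma s - ma0) / s)))
       \<longlongrightarrow> (Wc + 1/2 * (Lab + Lba)) - ((ma0 + 0 * (1/2 * la)) * (1/2 * lb) + mb0 * (1/2 * la))) (at_right 0)"
      by (intro tendsto_intros tA ta tb tendsto_ident_at)
    have eqL: "(Wc + 1/2 * (Lab + Lba)) - ((ma0 + 0 * (1/2 * la)) * (1/2 * lb) + mb0 * (1/2 * la))
       = wasserstein_cov M X f a b + (1/2) * (covar M (\<lambda>\<omega>. f a (X \<omega>)) (\<lambda>\<omega>. laplacian (f b) (X \<omega>))
                          + covar M (\<lambda>\<omega>. f b (X \<omega>)) (\<lambda>\<omega>. laplacian (f a) (X \<omega>)))"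
      unfolding cab cba Wc_def by (simp add: algebra_simps)
    show ?thesis
      using Lim_transform_eventually[OF lim ev] unfolding eqL .
  qed
  show ?thesis
  proof (intro conjI allI impI)
    fix a b show "((\<lambda>s. (covar M (\<lambda>\<omega>. f a (X \<omega> + sqrt s *\<^sub>R W \<omega>)) (\<lambda>\<omega>. f b (X \<omega> + sqrt s *\<^sub>R W \<omega>))
                    - covar M (\<lambda>\<omega>. f a (X \<omega>)) (\<lambda>\<omega>. f b (X \<omega>))) / s)
            \<longlongrightarrow> wasserstein_cov M X f a b
                 + (1/2) * (covar M (\<lambda>\<omega>. f a (X \<omega>)) (\<lambda>\<omega>. laplacian (f b) (X \<omega>))
                          + covar M (\<lambda>\<omega>. f b (X \<omega>)) (\<lambda>\<omega>. laplacian (f a) (X \<omega>)))) (at_right 0)"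
      by (rule main)
  next
    fix a b assume const: "\<forall>a. \<exists>c. \<forall>x. laplacian (f a) x = c"
    obtain ca where ca: "\<And>x. laplacian (f a) x = ca" using const by blast
    obtain cb where cb: "\<And>x. laplacian (f b) x = cb" using const by blast
    have "covar M (\<lambda>\<omega>. f a (X \<omega>)) (\<lambda>\<omega>. laplacian (f b) (X \<omega>)) = 0"
      unfolding cb by (rule covar_const[OF M])
    moreover have "covar M (\<lambda>\<omega>. f b (X \<omega>)) (\<lambda>\<omega>. laplacian (f a) (X \<omega>)) = 0"
      unfolding ca by (rule covar_const[OF M])
    ultimately show "((\<lambda>s. (covar M (\<lambda>\<omega>. f a (X \<omega> + sqrt s *\<^sub>R W \<omega>)) (\<lambda>\<omega>. f b (X \<omega> + sqrt s *\<^sub>R W \<omega>))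
                    - covar M (\<lambda>\<omega>. f a (X \<omega>)) (\<lambda>\<omega>. f b (X \<omega>))) / s)
            \<longlongrightarrow> wasserstein_cov M X f a b) (at_right 0)"
      using main[of a b] by simp
  qed
qed


end
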